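(* Let $\Omega\subset\mathbb{R}^d$ be compact with a probability measure $\mu$, let $2\le p<\infty$, and let $\mathcal{D}_N=\{\varphi_j\}_{j=1}^N\subset\mathcal{C}(\Omega)$ be a uniformly bounded Riesz system, i.e. $\sup_{x\in\Omega}|\varphi_j(x)|\le 1$ for all $j$ and, for some constants $0<R_1\le R_2<\infty$ and all $(a_1,\dots,a_N)\in\mathbb{C}^N$, $$R_1\Big(\sum_{j=1}^N|a_j|^2\Big)^{1/2}\le\Big\|\sum_{j=1}^N a_j\varphi_j\Big\|_{L_2(\Omega,\mu)}\le R_2\Big(\sum_{j=1}^N|a_j|^2\Big)^{1/2}.$$ Let $1\le u\le N$ be an integer, and let $\Omega_m=\{\xi^1,\dots,\xi^m\}\subset\Omega$ provide $L_2$-universal sampling discretization for the collection $\mathcal{X}_u(\mathcal{D}_N)$. Assume in addition that $\mathcal{D}_N\in NI(2,p,H,u)$. Then for every weakness parameter $t\in(0,1]$ there exists an integer $c=c(t,R_1,R_2)\ge 1$ such that for every integer $0\le v\le u/(1+c)$ and every $f_0\in\mathcal{C}(\Omega)$, the algorithm $\mathrm{WOMP}(\mathcal{D}_N(\Omega_m);t)_{L_2(\Omega_m,\mu_m)}$ applied to $f_0$ satisfies $$\|f_{cv}\|_{L_2(\Omega_m,\mu_m)}\le C_0\,\sigma_v(f_0,\mathcal{D}_N(\Omega_m))_{L_2(\Omega_m,\mu_m)},$$ $$\|f_{cv}\|_{L_p(\Omega,\mu)}\le H C_1\,\sigma_v(f_0,\mathcal{D}_N)_{L_p(\Omega,\mu_\xi)},$$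 where $C_0,C_1$ are absolute constants and $f_k$ is the residual after the $k$-th iteration.
   Context: For a system $\mathcal{D}=\{g_i\}$ in a normed space $X$ and a finite index set $J$, $V_J(\mathcal{D})=\operatorname{span}\{g_j:j\in J\}$; $\mathcal{X}_v(\mathcal{D})$ is the collection of all $V_J(\mathcal{D})$ with $|J|=v$; $\Sigma_v(\mathcal{D})=\bigcup_{V\in\mathcal{X}_v(\mathcal{D})}V$ (all $v$-term linear combinations); $\sigma_v(f,\mathcal{D})_X=\inf_{g\in\Sigma_v(\mathcal{D})}\|f-g\|_X$. For a measure $\nu$ on $\Omega$, $\|f\|_{L_p(\nu)}=(\int_\Omega|f|^p d\nu)^{1/p}$. A set $\xi=\{\xi^j\}_{j=1}^m\subset\Omega$ provides $L_p$-universal sampling discretization for a collection $\mathcal{X}$ of finite-dimensional subspaces if $\frac12\|f\|_p^p\le\frac1m\sum_{j=1}^m|f(\xi^j)|^p\le\frac32\|f\|_p^p$ for all $f\in\bigcup_{X\in\mathcal{X}}X$. $\mu_m=\frac1m\sum_{j=1}^m\delta_{\xi^j}$ is the uniform probability measure on $\Omega_m$, $L_2(\Omega_m,\mu_m)$ the corresponding Hilbert space, and $\mu_\xi=(\mu+\mu_m)/2$. $\mathcal{D}_N(\Omega_m)$ is the system of restrictions of the $\varphi_j$ to $\Omega_m$. $u$-term Nikol'skii inequality: for $1\le q\le p\le\infty$, a system $\Psi$ satisfies $\Psi\in NI(q,p,H,u)$ if $\|f\|_{L_p(\Omega,\mu)}\le H\|f\|_{L_q(\Omega,\mu)}$ for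 all $f\in\Sigma_u(\Psi)$ (necessarily $H\ge1$). WOMP: given a Hilbert space $H$ with inner product $\langle\cdot,\cdot\rangle$, a system $\mathcal{D}$ of nonzero elements of norm $\le1$, $t\in(0,1]$ and $f_0\in H$: for $k=1,2,\dots$ choose $g_k\in\mathcal{D}$ with $|\langle f_{k-1},g_k\rangle|\ge t\sup_{g\in\mathcal{D}}|\langle f_{k-1},g\rangle|$; let $G_k(f_0)$ be the orthogonal projection of $f_0$ onto $\operatorname{span}\{g_1,\dots,g_k\}$, and $f_k=f_0-G_k(f_0)$. Here it is run in $L_2(\Omega_m,\mu_m)$ on $f_0|_{\Omega_m}$ with dictionary $\mathcal{D}_N(\Omega_m)$; the projection $G_k(f_0)=\sum c_i\varphi_{i}|_{\Omega_m}$ (a combination of the selected elements) is identified with the function $\sum c_i\varphi_i$ on $\Omega$, and $f_k=f_0-G_k(f_0)$ is regarded as a function on $\Omega$ when its $L_p(\Omega,\mu)$ norm is taken. *)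

theory Defs
  imports "HOL-Analysis.Analysis" "HOL-Probability.Probability"
begin

text \<open>Points of R^d are represented as elements of nat => real vanishing at all
coordinates i >= d (product topology = Euclidean topology on that subspace).\<close>

definition Lp_norm :: "'a measure \<Rightarrow> real \<Rightarrow> ('a \<Rightarrow> complex) \<Rightarrow> real" where
  "Lp_norm M p f = (\<integral>x. cmod (f x) powr p \<partial>M) powr (1 / p)"

definition dinner :: "nat \<Rightarrow> (nat \<Rightarrow> 'a) \<Rightarrow> ('a \<Rightarrow> complex) \<Rightarrow> ('a \<Rightarrow> complex) \<Rightarrow> complex" where
  "dinner m \<xi> f g = (\<Sum>j\<in>{1..m}. f (\<xi> j) * cnj (g (\<xi> j))) / of_nat m"

definition dnorm :: "nat \<Rightarrow> (nat \<Rightarrow> 'a) \<Rightarrow> ('a \<Rightarrow> complex) \<Rightarrow> real" where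
  "dnorm m \<xi> f = sqrt ((\<Sum>j\<in>{1..m}. (cmod (f (\<xi> j)))\<^sup>2) / real m)"

text \<open>L_p(Omega, mu_xi) norm, mu_xi = (mu + mu_m)/2, with the integral written out.\<close>
definition Lp_xi_norm :: "'a measure \<Rightarrow> nat \<Rightarrow> (nat \<Rightarrow> 'a) \<Rightarrow> real \<Rightarrow> ('a \<Rightarrow> complex) \<Rightarrow> real" where
  "Lp_xi_norm M m \<xi> p f =
     ((1/2) * (\<integral>x. cmod (f x) powr p \<partial>M)
      + (1/2) * ((\<Sum>j\<in>{1..m}. cmod (f (\<xi> j)) powr p) / real m)) powr (1 / p)"

definition Sigma_terms :: "(nat \<Rightarrow> 'a \<Rightarrow> complex) \<Rightarrow> nat \<Rightarrow> nat \<Rightarrow> ('a \<Rightarrow> complex) set" where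
  "Sigma_terms \<phi> N v =
     {(\<lambda>x. \<Sum>j\<in>J. a j * \<phi> j x) | J a. J \<subseteq> {1..N} \<and> card J = v}"

definition sigma_disc :: "nat \<Rightarrow> (nat \<Rightarrow> 'a) \<Rightarrow> (nat \<Rightarrow> 'a \<Rightarrow> complex) \<Rightarrow> nat \<Rightarrow> nat
     \<Rightarrow> ('a \<Rightarrow> complex) \<Rightarrow> real" where
  "sigma_disc m \<xi> \<phi> N v f = (INF g\<in>Sigma_terms \<phi> N v. dnorm m \<xi> (\<lambda>x. f x - g x))"

definition sigma_xi :: "'a measure \<Rightarrow> nat \<Rightarrow> (nat \<Rightarrow> 'a) \<Rightarrow> real \<Rightarrow> (nat \<Rightarrow> 'a \<Rightarrow> complex)
     \<Rightarrow> nat \<Rightarrow> nat \<Rightarrow> ('a \<Rightarrow> complex) \<Rightarrow> real" where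
  "sigma_xi M m \<xi> p \<phi> N v f = (INF g\<in>Sigma_terms \<phi> N v. Lp_xi_norm M m \<xi> p (\<lambda>x. f x - g x))"

definition riesz_system :: "'a measure \<Rightarrow> (nat \<Rightarrow> 'a \<Rightarrow> complex) \<Rightarrow> nat \<Rightarrow> real \<Rightarrow> real \<Rightarrow> bool" where
  "riesz_system M \<phi> N R1 R2 \<longleftrightarrow>
     (\<forall>a :: nat \<Rightarrow> complex.
        R1 * sqrt (\<Sum>j\<in>{1..N}. (cmod (a j))\<^sup>2) \<le> Lp_norm M 2 (\<lambda>x. \<Sum>j\<in>{1..N}. a j * \<phi> j x)
      \<and> Lp_norm M 2 (\<lambda>x. \<Sum>j\<in>{1..N}. a j * \<phi> j x) \<le> R2 * sqrt (\<Sum>j\<in>{1..N}. (cmod (a j))\<^sup>2))"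

definition universal_discretization ::
  "'a measure \<Rightarrow> real \<Rightarrow> nat \<Rightarrow> (nat \<Rightarrow> 'a) \<Rightarrow> (nat \<Rightarrow> 'a \<Rightarrow> complex) \<Rightarrow> nat \<Rightarrow> nat \<Rightarrow> bool" where
  "universal_discretization M p m \<xi> \<phi> N u \<longleftrightarrow>
     (\<forall>J \<subseteq> {1..N}. card J = u \<longrightarrow> (\<forall>a :: nat \<Rightarrow> complex.
        let f = (\<lambda>x. \<Sum>j\<in>J. a j * \<phi> j x) in
          (1/2) * Lp_norm M p f powr p \<le> (\<Sum>j\<in>{1..m}. cmod (f (\<xi> j)) powr p) / real m
        \<and> (\<Sum>j\<in>{1..m}. cmod (f (\<xi> j)) powr p) / real m \<le> (3/2) * Lp_norm M p f powr p))"

definition nikolskii :: "'a measure \<Rightarrow> (nat \<Rightarrow> 'a \<Rightarrow> complex) \<Rightarrow> nat \<Rightarrow> real \<Rightarrow> real \<Rightarrow> real \<Rightarrow> nat \<Rightarrow> bool" where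
  "nikolskii M \<phi> N q p H u \<longleftrightarrow>
     (\<forall>f\<in>Sigma_terms \<phi> N u. Lp_norm M p f \<le> H * Lp_norm M q f)"

text \<open>A run of WOMP(D_N(Omega_m); t) in L_2(Omega_m, mu_m) started at f0:
  g k is the index of the element chosen at step k (k >= 1); F k is the residual
  f_k = f0 - G_k(f0) viewed as a function on Omega, where G_k(f0) = sum_i c_i phi_{g i}
  restricts on Omega_m to the orthogonal projection of f0 onto span{phi_{g 1},...,phi_{g k}}.\<close>
definition womp_run :: "nat \<Rightarrow> (nat \<Rightarrow> 'a) \<Rightarrow> (nat \<Rightarrow> 'a \<Rightarrow> complex) \<Rightarrow> nat \<Rightarrow> real
     \<Rightarrow> ('a \<Rightarrow> complex) \<Rightarrow> (nat \<Rightarrow> nat) \<Rightarrow> (nat \<Rightarrow> 'a \<Rightarrow> complex) \<Rightarrow> bool" where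
  "womp_run m \<xi> \<phi> N t f0 g F \<longleftrightarrow>
     (\<forall>k\<ge>1. g k \<in> {1..N}
        \<and> t * Max ((\<lambda>j. cmod (dinner m \<xi> (F (k - 1)) (\<phi> j))) ` {1..N})
            \<le> cmod (dinner m \<xi> (F (k - 1)) (\<phi> (g k))))
   \<and> (\<forall>k. \<exists>c :: nat \<Rightarrow> complex. F k = (\<lambda>x. f0 x - (\<Sum>i\<in>{1..k}. c i * \<phi> (g i) x)))
   \<and> (\<forall>k. \<forall>i\<in>{1..k}. dinner m \<xi> (F k) (\<phi> (g i)) = 0)"

end

theory Submission
  imports Defs
begin


definition nsq :: "nat \<Rightarrow> (nat \<Rightarrow> 'a) \<Rightarrow> ('a \<Rightarrow> complex) \<Rightarrow> real" where
  "nsq m \<xi> f = (\<Sum>j\<in>{1..m}. (cmod (f (\<xi> j)))\<^sup>2) / real m"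

definition comb :: "(nat \<Rightarrow> 'a \<Rightarrow> complex) \<Rightarrow> nat set \<Rightarrow> (nat \<Rightarrow> complex) \<Rightarrow> 'a \<Rightarrow> complex" where
  "comb \<phi> J \<beta> = (\<lambda>x. \<Sum>j\<in>J. \<beta> j * \<phi> j x)"

lemma nsq_nonneg: "0 \<le> nsq m \<xi> f"
  unfolding nsq_def by (intro divide_nonneg_nonneg sum_nonneg) auto

lemma dnorm_nonneg: "0 \<le> dnorm m \<xi> f"
  unfolding dnorm_def by (intro real_sqrt_ge_zero divide_nonneg_nonneg sum_nonneg) auto

lemma dnorm_sq: "(dnorm m \<xi> f)\<^sup>2 = nsq m \<xi> f"
  unfolding dnorm_def nsq_def by (simp add: sum_nonneg)

lemma dnorm_eq: "dnorm m \<xi> f = sqrt (nsq m \<xi> f)"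
  unfolding dnorm_def nsq_def by simp

lemma cmod_diff_sq: "(cmod (x - y))\<^sup>2 = (cmod x)\<^sup>2 - 2 * Re (x * cnj y) + (cmod y)\<^sup>2"
  unfolding cmod_power2 by (simp add: power2_eq_square algebra_simps)

lemma nsq_diff:
  "nsq m \<xi> (\<lambda>x. f x - h x) = nsq m \<xi> f - 2 * Re (dinner m \<xi> f h) + nsq m \<xi> h"
proof -
  have "(\<Sum>j\<in>{1..m}. (cmod (f (\<xi> j) - h (\<xi> j)))\<^sup>2) =
     (\<Sum>j\<in>{1..m}. (cmod (f (\<xi> j)))\<^sup>2) - 2 * (\<Sum>j\<in>{1..m}. Re (f (\<xi> j) * cnj (h (\<xi> j))))
       + (\<Sum>j\<in>{1..m}. (cmod (h (\<xi> j)))\<^sup>2)"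
    by (simp add: cmod_diff_sq sum.distrib sum_subtractf sum_distrib_left)
  moreover have "Re (dinner m \<xi> f h) = (\<Sum>j\<in>{1..m}. Re (f (\<xi> j) * cnj (h (\<xi> j)))) / real m"
    unfolding dinner_def by (simp add: Re_divide_of_nat)
  ultimately show ?thesis unfolding nsq_def by (simp add: diff_divide_distrib add_divide_distrib)
qed

lemma dinner_sum_right:
  "dinner m \<xi> f (\<lambda>x. \<Sum>j\<in>J. \<beta> j * \<phi> j x) = (\<Sum>j\<in>J. cnj (\<beta> j) * dinner m \<xi> f (\<phi> j))"
  unfolding dinner_def
  by (simp add: sum_divide_distrib sum_distrib_left sum_distrib_right mult.commute mult.left_commute
      flip: sum.swap[of _ J] )

lemma dinner_diff_right:
  "dinner m \<xi> f (\<lambda>x. h1 x - h2 x) = dinner m \<xi> f h1 - dinner m \<xi> f h2"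
  unfolding dinner_def by (simp add: sum_subtractf ring_distribs diff_divide_distrib)

lemma dinner_scale_right:
  "dinner m \<xi> f (\<lambda>x. c * h x) = cnj c * dinner m \<xi> f h"
  unfolding dinner_def by (simp add: sum_distrib_left mult_ac)

lemma dnorm_triangle:
  "dnorm m \<xi> (\<lambda>x. f x + h x) \<le> dnorm m \<xi> f + dnorm m \<xi> h"
proof -
  have "L2_set (\<lambda>j. cmod (f (\<xi> j) + h (\<xi> j))) {1..m}
     \<le> L2_set (\<lambda>j. cmod (f (\<xi> j)) + cmod (h (\<xi> j))) {1..m}"
    by (intro L2_set_mono norm_triangle_ineq) auto
  also have "\<dots> \<le> L2_set (\<lambda>j. cmod (f (\<xi> j))) {1..m} + L2_set (\<lambda>j. cmod (h (\<xi> j))) {1..m}"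
    by (rule L2_set_triangle_ineq)
  finally have *: "L2_set (\<lambda>j. cmod (f (\<xi> j) + h (\<xi> j))) {1..m} \<le>
      L2_set (\<lambda>j. cmod (f (\<xi> j))) {1..m} + L2_set (\<lambda>j. cmod (h (\<xi> j))) {1..m}" .
  have e: "dnorm m \<xi> q = L2_set (\<lambda>j. cmod (q (\<xi> j))) {1..m} / sqrt (real m)" for q
    unfolding dnorm_def L2_set_def by (simp add: real_sqrt_divide)
  show ?thesis unfolding e using divide_right_mono[OF *, of "sqrt (real m)"] by (simp add: add_divide_distrib)
qed

lemma dnorm_triangle_diff:
  "dnorm m \<xi> (\<lambda>x. f x - h x) \<le> dnorm m \<xi> f + dnorm m \<xi> h"
proof -
  have "dnorm m \<xi> (\<lambda>x. - h x) = dnorm m \<xi> h" unfolding dnorm_def by simp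
  with dnorm_triangle[of m \<xi> f "\<lambda>x. - h x"] show ?thesis by simp
qed



lemma comb_extend:
  assumes "finite A" "J \<subseteq> A"
  shows "comb \<phi> J \<beta> = comb \<phi> A (\<lambda>j. if j \<in> J then \<beta> j else 0)"
  unfolding comb_def
proof
  fix x
  have "(\<Sum>j\<in>A. (if j \<in> J then \<beta> j else 0) * \<phi> j x) = (\<Sum>j\<in>J. (if j \<in> J then \<beta> j else 0) * \<phi> j x)"
    using assms by (intro sum.mono_neutral_right) auto
  then show "(\<Sum>j\<in>J. \<beta> j * \<phi> j x) = (\<Sum>j\<in>A. (if j \<in> J then \<beta> j else 0) * \<phi> j x)"
    by simp
qed

lemma comb_diff: "comb \<phi> A \<beta>1 x - comb \<phi> A \<beta>2 x = comb \<phi> A (\<lambda>j. \<beta>1 j - \<beta>2 j) x"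
  unfolding comb_def by (simp add: sum_subtractf ring_distribs)

lemma comb_add: "comb \<phi> A \<beta>1 x + comb \<phi> A \<beta>2 x = comb \<phi> A (\<lambda>j. \<beta>1 j + \<beta>2 j) x"
  unfolding comb_def by (simp add: sum.distrib ring_distribs)

lemma comb_union:
  assumes "finite A" "finite B" "A \<inter> B = {}"
  shows "comb \<phi> (A \<union> B) \<beta> x = comb \<phi> A \<beta> x + comb \<phi> B \<beta> x"
  unfolding comb_def using assms by (simp add: sum.union_disjoint)

lemma nsq_scale: "nsq m \<xi> (\<lambda>x. c * h x) = (cmod c)\<^sup>2 * nsq m \<xi> h"
  unfolding nsq_def by (simp add: norm_mult power_mult_distrib sum_distrib_left)

lemma nsq_neg: "nsq m \<xi> (\<lambda>x. - h x) = nsq m \<xi> h"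
  unfolding nsq_def by simp

lemma dinner_zero_comb:
  assumes "\<And>j. j \<in> J \<Longrightarrow> dinner m \<xi> f (\<phi> j) = 0"
  shows "dinner m \<xi> f (comb \<phi> J \<beta>) = 0"
  unfolding comb_def dinner_sum_right using assms by simp

lemma iter_contract:
  fixes Ef :: "nat \<Rightarrow> real"
  assumes mono: "\<forall>i<n. Ef (Suc i) \<le> Ef i"
    and step: "\<forall>i<n. \<gamma> * (Ef i - B) \<le> L * (Ef i - Ef (Suc i))"
    and pos: "0 < \<gamma>" "0 < L" "0 \<le> B" "0 \<le> Ef 0"
  shows "Ef n \<le> B + Ef 0 / (1 + real n * \<gamma> / L)"
proof -
  define P where "P i = max (Ef i - B) 0" for i
  define q where "q = 1 + \<gamma> / L"
  have q1: "1 \<le> q" using pos by (simp add: q_def)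
  have cl: "P (Suc i) * q \<le> P i" if "i < n" for i
  proof (cases "Ef (Suc i) \<le> B")
    case True
    then show ?thesis using P_def by simp
  next
    case False
    have m: "Ef (Suc i) \<le> Ef i" using mono that by blast
    have s: "\<gamma> * (Ef i - B) \<le> L * (Ef i - Ef (Suc i))" using step that by blast
    have "(Ef (Suc i) - B) * (1 + \<gamma> / L) \<le> Ef i - B"
    proof -
      have "(Ef (Suc i) - B) * \<gamma> \<le> (Ef i - B) * \<gamma>" using m pos by (simp add: mult_right_mono)
      also have "\<dots> \<le> L * (Ef i - Ef (Suc i))" using s by (simp add: mult.commute)
      finally have "(Ef (Suc i) - B) * \<gamma> \<le> L * (Ef i - Ef (Suc i))" .
      then show ?thesis using pos by (simp add: field_simps)
    qed
    then show ?thesis using False m unfolding P_def q_def by simp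
  qed
  have ind: "i \<le> n \<Longrightarrow> P i * q ^ i \<le> P 0" for i
  proof (induction i)
    case 0 then show ?case by simp
  next
    case (Suc i)
    have "P (Suc i) * q ^ Suc i = (P (Suc i) * q) * q ^ i" by (simp add: mult_ac)
    also have "\<dots> \<le> P i * q ^ i" using cl[of i] Suc.prems q1 by (intro mult_right_mono) auto
    also have "\<dots> \<le> P 0" using Suc by simp
    finally show ?case .
  qed
  have bern: "1 + real n * (\<gamma> / L) \<le> q ^ n" unfolding q_def
  proof (rule Bernoulli_inequality)
    have "0 \<le> \<gamma> / L" using pos by simp
    then show "- 1 \<le> \<gamma> / L" by linarith
  qed
  have Pn: "0 \<le> P n" by (simp add: P_def)
  have "P n * (1 + real n * \<gamma> / L) \<le> P n * q ^ n" using bern Pn by (intro mult_left_mono) auto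
  also have "\<dots> \<le> P 0" using ind by simp
  also have "\<dots> \<le> Ef 0" using pos by (simp add: P_def)
  finally have "P n * (1 + real n * \<gamma> / L) \<le> Ef 0" .
  moreover have "0 < 1 + real n * \<gamma> / L" using pos by (simp add: add_pos_nonneg)
  ultimately have "P n \<le> Ef 0 / (1 + real n * \<gamma> / L)" by (simp add: pos_le_divide_eq)
  then show ?thesis unfolding P_def by simp
qed

locale omp =
  fixes m :: nat and \<xi> :: "nat \<Rightarrow> 'a" and \<phi> :: "nat \<Rightarrow> 'a \<Rightarrow> complex" and N u :: nat
    and t a b :: real and f0 :: "'a \<Rightarrow> complex" and g :: "nat \<Rightarrow> nat" and F :: "nat \<Rightarrow> 'a \<Rightarrow> complex"
  assumes m_pos: "0 < m"
    and phi_le1: "\<And>j. j \<in> {1..N} \<Longrightarrow> nsq m \<xi> (\<phi> j) \<le> 1"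
    and rip_lo: "\<And>J \<beta>. J \<subseteq> {1..N} \<Longrightarrow> card J \<le> u \<Longrightarrow> a * (\<Sum>j\<in>J. (cmod (\<beta> j))\<^sup>2) \<le> nsq m \<xi> (comb \<phi> J \<beta>)"
    and rip_hi: "\<And>J \<beta>. J \<subseteq> {1..N} \<Longrightarrow> card J \<le> u \<Longrightarrow> nsq m \<xi> (comb \<phi> J \<beta>) \<le> b * (\<Sum>j\<in>J. (cmod (\<beta> j))\<^sup>2)"
    and run: "womp_run m \<xi> \<phi> N t f0 g F"
    and t_pos: "0 < t" and a_pos: "0 < a" and N_pos: "0 < N"
begin

definition S :: "nat \<Rightarrow> nat set" where "S k = g ` {1..k}"

abbreviation E where "E k \<equiv> nsq m \<xi> (F k)"

lemma g_range: "1 \<le> k \<Longrightarrow> g k \<in> {1..N}"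
  using run unfolding womp_run_def by auto

lemma S_sub: "S k \<subseteq> {1..N}"
  unfolding S_def using g_range by auto

lemma S_finite: "finite (S k)"
  unfolding S_def by simp

lemma S_card: "card (S k) \<le> k"
  unfolding S_def using card_image_le[of "{1..k}" g] by simp

lemma S_mono: "k \<le> k' \<Longrightarrow> S k \<subseteq> S k'"
  unfolding S_def by auto

lemma S_Suc: "S (Suc k) = insert (g (Suc k)) (S k)"
  unfolding S_def by (auto simp: atLeastAtMostSuc_conv)

lemma F_rep: "\<exists>\<gamma>. F k = (\<lambda>x. f0 x - comb \<phi> (S k) \<gamma> x)"
proof -
  obtain c where c: "F k = (\<lambda>x. f0 x - (\<Sum>i\<in>{1..k}. c i * \<phi> (g i) x))"
    using run unfolding womp_run_def by blast
  have "(\<Sum>i\<in>{1..k}. c i * \<phi> (g i) x) = comb \<phi> (S k) (\<lambda>j. \<Sum>i\<in>{i\<in>{1..k}. g i = j}. c i) x" for x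
  proof -
    have "(\<Sum>i\<in>{1..k}. c i * \<phi> (g i) x) = (\<Sum>j\<in>g ` {1..k}. \<Sum>i\<in>{i\<in>{1..k}. g i = j}. c i * \<phi> (g i) x)"
      by (rule sum.image_gen) simp
    also have "\<dots> = (\<Sum>j\<in>g ` {1..k}. (\<Sum>i\<in>{i\<in>{1..k}. g i = j}. c i) * \<phi> j x)"
      by (intro sum.cong refl) (simp add: sum_distrib_right)
    finally show ?thesis unfolding comb_def S_def .
  qed
  then show ?thesis using c by auto
qed

lemma orth: "J \<subseteq> S k \<Longrightarrow> dinner m \<xi> (F k) (comb \<phi> J \<beta>) = 0"
  using run unfolding womp_run_def S_def by (intro dinner_zero_comb) auto

lemma best:
  assumes "J \<subseteq> S k"
  shows "E k \<le> nsq m \<xi> (\<lambda>x. f0 x - comb \<phi> J \<beta> x)"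
proof -
  obtain \<gamma> where \<gamma>: "F k = (\<lambda>x. f0 x - comb \<phi> (S k) \<gamma> x)" using F_rep by blast
  define \<beta>' where "\<beta>' = (\<lambda>j. if j \<in> J then \<beta> j else 0)"
  have ext: "comb \<phi> J \<beta> = comb \<phi> (S k) \<beta>'" unfolding \<beta>'_def using S_finite assms by (rule comb_extend)
  have eq: "(\<lambda>x. f0 x - comb \<phi> J \<beta> x) = (\<lambda>x. F k x - comb \<phi> (S k) (\<lambda>j. \<beta>' j - \<gamma> j) x)"
    unfolding ext \<gamma> by (auto simp flip: comb_diff)
  show ?thesis unfolding eq nsq_diff using orth[of "S k" k] nsq_nonneg[of m \<xi>] by simp
qed

lemma E_Suc_le: "E (Suc k) \<le> E k"
proof -
  obtain \<gamma> where \<gamma>: "F k = (\<lambda>x. f0 x - comb \<phi> (S k) \<gamma> x)" using F_rep by blast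
  show ?thesis using best[of "S k" "Suc k" \<gamma>] S_mono[of k "Suc k"] \<gamma> by simp
qed

lemma E_mono: "k \<le> k' \<Longrightarrow> E k' \<le> E k"
  by (induction k' rule: dec_induct) (use E_Suc_le order_trans in blast)+


definition Mx :: "nat \<Rightarrow> real" where
  "Mx k = Max ((\<lambda>j. cmod (dinner m \<xi> (F k) (\<phi> j))) ` {1..N})"

lemma Mx_ge: "j \<in> {1..N} \<Longrightarrow> cmod (dinner m \<xi> (F k) (\<phi> j)) \<le> Mx k"
  unfolding Mx_def by (rule Max_ge) auto

lemma select: "t * Mx k \<le> cmod (dinner m \<xi> (F k) (\<phi> (g (Suc k))))"
proof -
  from run have "\<forall>k\<ge>1. t * Max ((\<lambda>j. cmod (dinner m \<xi> (F (k - 1)) (\<phi> j))) ` {1..N})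
            \<le> cmod (dinner m \<xi> (F (k - 1)) (\<phi> (g k)))" unfolding womp_run_def by blast
  from this[rule_format, of "Suc k"] show ?thesis unfolding Mx_def by simp
qed

lemma orth1: "j \<in> S k \<Longrightarrow> dinner m \<xi> (F k) (\<phi> j) = 0"
  using run unfolding womp_run_def S_def by auto

lemma decrease:
  "E (Suc k) \<le> E k - (cmod (dinner m \<xi> (F k) (\<phi> (g (Suc k)))))\<^sup>2"
proof -
  define \<iota> where "\<iota> = dinner m \<xi> (F k) (\<phi> (g (Suc k)))"
  define p where "p = g (Suc k)"
  obtain \<gamma> where \<gamma>: "F k = (\<lambda>x. f0 x - comb \<phi> (S k) \<gamma> x)" using F_rep by blast
  define \<beta> where "\<beta> = (\<lambda>j. (if j \<in> S k then \<gamma> j else 0) + (if j = p then \<iota> else 0))"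
  have c1: "comb \<phi> (S k) \<gamma> = comb \<phi> (S (Suc k)) (\<lambda>j. if j \<in> S k then \<gamma> j else 0)"
    using comb_extend[OF S_finite S_mono[of k "Suc k"]] by simp
  have c2: "comb \<phi> (S (Suc k)) (\<lambda>j. if j = p then \<iota> else 0) x = \<iota> * \<phi> p x" for x
  proof -
    have "comb \<phi> (S (Suc k)) (\<lambda>j. if j = p then \<iota> else 0) x = (\<Sum>j\<in>S (Suc k). if j = p then \<iota> * \<phi> j x else 0)"
      unfolding comb_def by (intro sum.cong) auto
    also have "\<dots> = \<iota> * \<phi> p x" using S_finite by (simp add: S_Suc p_def)
    finally show ?thesis .
  qed
  have eq: "(\<lambda>x. f0 x - comb \<phi> (S (Suc k)) \<beta> x) = (\<lambda>x. F k x - \<iota> * \<phi> p x)"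
  proof
    fix x
    have "comb \<phi> (S (Suc k)) \<beta> x = comb \<phi> (S k) \<gamma> x + \<iota> * \<phi> p x"
      unfolding \<beta>_def c1 by (simp flip: comb_add add: c2)
    then show "f0 x - comb \<phi> (S (Suc k)) \<beta> x = F k x - \<iota> * \<phi> p x" using \<gamma> by simp
  qed
  have "E (Suc k) \<le> nsq m \<xi> (\<lambda>x. f0 x - comb \<phi> (S (Suc k)) \<beta> x)" by (rule best) simp
  also have "\<dots> = E k - 2 * Re (cnj \<iota> * \<iota>) + (cmod \<iota>)\<^sup>2 * nsq m \<xi> (\<phi> p)"
    unfolding eq nsq_diff dinner_scale_right nsq_scale by (simp add: \<iota>_def p_def)
  also have "\<dots> \<le> E k - (cmod \<iota>)\<^sup>2"
  proof -
    have "nsq m \<xi> (\<phi> p) \<le> 1" using phi_le1 g_range p_def by simp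
    moreover have "Re (cnj \<iota> * \<iota>) = (cmod \<iota>)\<^sup>2" unfolding cmod_power2 by (simp add: power2_eq_square)
    ultimately show ?thesis using mult_left_mono[of "nsq m \<xi> (\<phi> p)" 1 "(cmod \<iota>)\<^sup>2"] by simp
  qed
  finally show ?thesis unfolding \<iota>_def .
qed

lemma key:
  assumes U: "U \<subseteq> {1..N}" and card: "card (U \<union> S k) \<le> u" and J: "J \<subseteq> U \<union> S k"
  shows "a * (E k - nsq m \<xi> (\<lambda>x. f0 x - comb \<phi> J \<zeta> x)) \<le> real (card U) * (Mx k)\<^sup>2"
proof -
  let ?A = "U \<union> S k"
  have finU: "finite U" using U finite_subset by blast
  have finA: "finite ?A" using finU S_finite by auto
  have AN: "?A \<subseteq> {1..N}" using U S_sub by auto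
  obtain \<gamma> where \<gamma>: "F k = (\<lambda>x. f0 x - comb \<phi> (S k) \<gamma> x)" using F_rep by blast
  define \<beta> where "\<beta> = (\<lambda>j. (if j \<in> J then \<zeta> j else 0) - (if j \<in> S k then \<gamma> j else 0))"
  define d where "d = comb \<phi> ?A \<beta>"
  have e1: "comb \<phi> J \<zeta> = comb \<phi> ?A (\<lambda>j. if j \<in> J then \<zeta> j else 0)"
    using finA J by (rule comb_extend)
  have e2: "comb \<phi> (S k) \<gamma> = comb \<phi> ?A (\<lambda>j. if j \<in> S k then \<gamma> j else 0)"
    using finA by (intro comb_extend) auto
  have eq: "(\<lambda>x. f0 x - comb \<phi> J \<zeta> x) = (\<lambda>x. F k x - d x)"
  proof
    fix x
    have "d x = comb \<phi> J \<zeta> x - comb \<phi> (S k) \<gamma> x"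
      unfolding d_def \<beta>_def e1 e2 by (simp add: comb_diff)
    then show "f0 x - comb \<phi> J \<zeta> x = F k x - d x" using \<gamma> by simp
  qed
  have D: "nsq m \<xi> (\<lambda>x. f0 x - comb \<phi> J \<zeta> x) = E k - 2 * Re (dinner m \<xi> (F k) d) + nsq m \<xi> d"
    unfolding eq nsq_diff ..
  have dsum: "dinner m \<xi> (F k) d = (\<Sum>j\<in>?A - S k. cnj (\<beta> j) * dinner m \<xi> (F k) (\<phi> j))"
  proof -
    have "dinner m \<xi> (F k) d = (\<Sum>j\<in>?A. cnj (\<beta> j) * dinner m \<xi> (F k) (\<phi> j))"
      unfolding d_def comb_def by (rule dinner_sum_right)
    also have "\<dots> = (\<Sum>j\<in>?A - S k. cnj (\<beta> j) * dinner m \<xi> (F k) (\<phi> j))"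
      using finA orth1 by (intro sum.mono_neutral_right) auto
    finally show ?thesis .
  qed
  define Q where "Q = (\<Sum>j\<in>?A - S k. cmod (\<beta> j))"
  define B2 where "B2 = (\<Sum>j\<in>?A. (cmod (\<beta> j))\<^sup>2)"
  have ReQ: "Re (dinner m \<xi> (F k) d) \<le> Mx k * Q"
  proof -
    have "Re (dinner m \<xi> (F k) d) \<le> cmod (dinner m \<xi> (F k) d)" by (rule complex_Re_le_cmod)
    also have "\<dots> \<le> (\<Sum>j\<in>?A - S k. cmod (cnj (\<beta> j) * dinner m \<xi> (F k) (\<phi> j)))"
      unfolding dsum by (rule norm_sum)
    also have "\<dots> \<le> (\<Sum>j\<in>?A - S k. cmod (\<beta> j) * Mx k)"
      using AN by (intro sum_mono) (auto simp: norm_mult intro!: mult_left_mono Mx_ge)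
    finally show ?thesis unfolding Q_def by (simp add: sum_distrib_left mult.commute)
  qed
  have Q2: "Q\<^sup>2 \<le> real (card U) * B2"
  proof -
    have "Q\<^sup>2 \<le> (\<Sum>j\<in>?A - S k. (cmod (\<beta> j))\<^sup>2) * real (card (?A - S k))"
      unfolding Q_def by (rule sum_squared_le_sum_of_squares)
    also have "\<dots> \<le> B2 * real (card U)"
    proof (rule mult_mono)
      show "(\<Sum>j\<in>?A - S k. (cmod (\<beta> j))\<^sup>2) \<le> B2"
        unfolding B2_def using finA by (intro sum_mono2) auto
      have "card (?A - S k) \<le> card U" using finU by (intro card_mono) auto
      then show "real (card (?A - S k)) \<le> real (card U)" by simp
    qed (auto simp: B2_def intro: sum_nonneg)
    finally show ?thesis by (simp add: mult.commute)
  qed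
  have rip: "a * B2 \<le> nsq m \<xi> d" unfolding B2_def d_def using AN card by (rule rip_lo)
  have Q0: "0 \<le> Q" unfolding Q_def by (intro sum_nonneg) auto
  have B0: "0 \<le> B2" unfolding B2_def by (intro sum_nonneg) auto
  define Dd where "Dd = nsq m \<xi> d"
  have goal: "a * (2 * (Mx k * Q) - Dd) \<le> real (card U) * (Mx k)\<^sup>2"
  proof (cases "Dd = 0")
    case True
    then have "B2 = 0" using rip a_pos B0 Dd_def by (simp add: mult_le_0_iff)
    then have "Q = 0" using Q2 Q0 by simp
    then show ?thesis using True by simp
  next
    case False
    then have Dp: "0 < Dd" using nsq_nonneg Dd_def by (metis order_le_less)
    have l: "a * Q\<^sup>2 \<le> real (card U) * Dd"
    proof -
      have "a * Q\<^sup>2 \<le> a * (real (card U) * B2)" using Q2 a_pos by simp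
      also have "\<dots> \<le> real (card U) * Dd" using mult_left_mono[OF rip, of "real (card U)"] Dd_def by (simp add: mult.left_commute)
      finally show ?thesis .
    qed
    have "a * (2 * (Mx k * Q) - Dd) \<le> a * (Mx k)\<^sup>2 * Q\<^sup>2 / Dd"
    proof -
      have "0 \<le> a * (Mx k * Q - Dd)\<^sup>2 / Dd" using a_pos Dp by simp
      then show ?thesis using Dp by (simp add: field_simps power2_eq_square)
    qed
    also have "\<dots> \<le> real (card U) * (Mx k)\<^sup>2"
    proof -
      have "a * Q\<^sup>2 * (Mx k)\<^sup>2 \<le> real (card U) * Dd * (Mx k)\<^sup>2" using l by (simp add: mult_right_mono)
      then show ?thesis using Dp by (simp add: field_simps)
    qed
    finally show ?thesis .
  qed
  have "a * (E k - nsq m \<xi> (\<lambda>x. f0 x - comb \<phi> J \<zeta> x)) = a * (2 * Re (dinner m \<xi> (F k) d) - Dd)"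
    unfolding D Dd_def by simp
  also have "\<dots> \<le> a * (2 * (Mx k * Q) - Dd)" using ReQ a_pos by simp
  finally show ?thesis using goal by linarith
qed

lemma Mx_nonneg: "0 \<le> Mx k"
proof -
  have "1 \<in> {1..N}" using N_pos by simp
  from Mx_ge[OF this, of k] show ?thesis using norm_ge_zero order_trans by blast
qed

lemma step:
  assumes U: "U \<subseteq> {1..N}" and card: "card (U \<union> S k) \<le> u" and J: "J \<subseteq> U \<union> S k"
  shows "a * t\<^sup>2 * (E k - nsq m \<xi> (\<lambda>x. f0 x - comb \<phi> J \<zeta> x)) \<le> real (card U) * (E k - E (Suc k))"
proof -
  have k: "a * (E k - nsq m \<xi> (\<lambda>x. f0 x - comb \<phi> J \<zeta> x)) \<le> real (card U) * (Mx k)\<^sup>2"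
    using key[OF U card J] .
  have "(t * Mx k)\<^sup>2 \<le> (cmod (dinner m \<xi> (F k) (\<phi> (g (Suc k)))))\<^sup>2"
    using select[of k] t_pos Mx_nonneg[of k] by (intro power_mono) auto
  then have tm: "t\<^sup>2 * (Mx k)\<^sup>2 \<le> E k - E (Suc k)" using decrease[of k] by (simp add: power_mult_distrib)
  have "a * t\<^sup>2 * (E k - nsq m \<xi> (\<lambda>x. f0 x - comb \<phi> J \<zeta> x)) \<le> t\<^sup>2 * (real (card U) * (Mx k)\<^sup>2)"
    using mult_left_mono[OF k, of "t\<^sup>2"] by (simp add: mult_ac)
  also have "\<dots> = real (card U) * (t\<^sup>2 * (Mx k)\<^sup>2)" by (simp add: mult_ac)
  also have "\<dots> \<le> real (card U) * (E k - E (Suc k))" using tm by (intro mult_left_mono) auto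
  finally show ?thesis .
qed

lemma substage:
  assumes U: "U \<subseteq> {1..N}" "U \<noteq> {}" and J: "J \<subseteq> U \<union> S k0"
    and card: "\<And>k. k0 \<le> k \<Longrightarrow> k < k0 + n \<Longrightarrow> card (U \<union> S k) \<le> u"
  shows "E (k0 + n) \<le> nsq m \<xi> (\<lambda>x. f0 x - comb \<phi> J \<zeta> x) + E k0 / (1 + real n * (a * t\<^sup>2) / real (card U))"
proof -
  have finU: "finite U" using U finite_subset by blast
  then have cU: "0 < real (card U)" using U by (simp add: card_gt_0_iff)
  define B where "B = nsq m \<xi> (\<lambda>x. f0 x - comb \<phi> J \<zeta> x)"
  have st: "\<forall>i<n. a * t\<^sup>2 * (E (k0 + i) - B) \<le> real (card U) * (E (k0 + i) - E (k0 + Suc i))"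
  proof (intro allI impI)
    fix i assume "i < n"
    have "J \<subseteq> U \<union> S (k0 + i)" using J S_mono[of k0 "k0 + i"] by auto
    then show "a * t\<^sup>2 * (E (k0 + i) - B) \<le> real (card U) * (E (k0 + i) - E (k0 + Suc i))"
      using step[OF U(1) card, of "k0 + i" J \<zeta>] \<open>i < n\<close> unfolding B_def by simp
  qed
  have mo: "\<forall>i<n. E (k0 + Suc i) \<le> E (k0 + i)" using E_Suc_le by simp
  have "0 < a * t\<^sup>2" using a_pos t_pos by simp
  moreover have "0 \<le> B" unfolding B_def by (rule nsq_nonneg)
  moreover have "0 \<le> E (k0 + 0)" by (rule nsq_nonneg)
  ultimately have "E (k0 + n) \<le> B + E (k0 + 0) / (1 + real n * (a * t\<^sup>2) / real (card U))"
    using iter_contract[of n "\<lambda>i. E (k0 + i)" "a * t\<^sup>2" B "real (card U)"] mo st cU by blast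
  then show ?thesis unfolding B_def by simp
qed

context
  fixes T :: "nat set" and x :: "nat \<Rightarrow> complex"
  assumes T: "T \<subseteq> {1..N}"
begin


abbreviation \<sigma>2 where "\<sigma>2 \<equiv> nsq m \<xi> (\<lambda>y. f0 y - comb \<phi> T x y)"

lemma finT: "finite T" using T finite_subset by blast

lemma sq_sum_le: "(p + q)\<^sup>2 \<le> 2 * p\<^sup>2 + 2 * (q::real)\<^sup>2"
proof -
  have "0 \<le> (p - q)\<^sup>2" by simp
  then show ?thesis by (simp add: power2_eq_square algebra_simps)
qed

lemma upper_gen:
  assumes cT: "card T \<le> u"
  shows "nsq m \<xi> (\<lambda>y. f0 y - comb \<phi> (T \<inter> A) x y) \<le> 2 * \<sigma>2 + 2 * b * (\<Sum>j\<in>T - A. (cmod (x j))\<^sup>2)"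
proof -
  have split: "comb \<phi> T x y = comb \<phi> (T \<inter> A) x y + comb \<phi> (T - A) x y" for y
  proof -
    have "T = (T \<inter> A) \<union> (T - A)" by auto
    then have "comb \<phi> T x y = comb \<phi> ((T \<inter> A) \<union> (T - A)) x y" by simp
    also have "\<dots> = comb \<phi> (T \<inter> A) x y + comb \<phi> (T - A) x y" using finT by (intro comb_union) auto
    finally show ?thesis .
  qed
  have eq: "(\<lambda>y. f0 y - comb \<phi> (T \<inter> A) x y) = (\<lambda>y. (f0 y - comb \<phi> T x y) + comb \<phi> (T - A) x y)"
    using split by (auto simp: algebra_simps)
  have "dnorm m \<xi> (\<lambda>y. f0 y - comb \<phi> (T \<inter> A) x y) \<le> dnorm m \<xi> (\<lambda>y. f0 y - comb \<phi> T x y) + dnorm m \<xi> (comb \<phi> (T - A) x)"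
    unfolding eq by (rule dnorm_triangle)
  then have "nsq m \<xi> (\<lambda>y. f0 y - comb \<phi> (T \<inter> A) x y) \<le> (dnorm m \<xi> (\<lambda>y. f0 y - comb \<phi> T x y) + dnorm m \<xi> (comb \<phi> (T - A) x))\<^sup>2"
    by (metis dnorm_nonneg dnorm_sq power_mono)
  also have "\<dots> \<le> 2 * \<sigma>2 + 2 * nsq m \<xi> (comb \<phi> (T - A) x)"
    by (metis sq_sum_le dnorm_sq)
  also have "\<dots> \<le> 2 * \<sigma>2 + 2 * (b * (\<Sum>j\<in>T - A. (cmod (x j))\<^sup>2))"
  proof -
    have "card (T - A) \<le> u" using cT card_mono[OF finT, of "T - A"] by auto
    then show ?thesis using rip_hi[of "T - A" x] T by auto
  qed
  finally show ?thesis by simp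
qed

lemma lower:
  assumes cT: "card (T \<union> S k) \<le> u"
  shows "a * (\<Sum>j\<in>T - S k. (cmod (x j))\<^sup>2) \<le> 2 * E k + 2 * \<sigma>2"
proof -
  obtain \<gamma> where \<gamma>: "F k = (\<lambda>y. f0 y - comb \<phi> (S k) \<gamma> y)" using F_rep by blast
  let ?A = "T \<union> S k"
  have finA: "finite ?A" using finT S_finite by auto
  define yy where "yy = (\<lambda>j. (if j \<in> T then x j else 0) - (if j \<in> S k then \<gamma> j else 0))"
  have e1: "comb \<phi> T x = comb \<phi> ?A (\<lambda>j. if j \<in> T then x j else 0)"
    using finA by (intro comb_extend) auto
  have e2: "comb \<phi> (S k) \<gamma> = comb \<phi> ?A (\<lambda>j. if j \<in> S k then \<gamma> j else 0)"
    using finA by (intro comb_extend) auto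
  have eq: "comb \<phi> ?A yy = (\<lambda>y. F k y - (f0 y - comb \<phi> T x y))"
  proof
    fix y
    have "comb \<phi> ?A yy y = comb \<phi> T x y - comb \<phi> (S k) \<gamma> y"
      unfolding yy_def e1 e2 by (simp add: comb_diff)
    then show "comb \<phi> ?A yy y = F k y - (f0 y - comb \<phi> T x y)" using \<gamma> by simp
  qed
  have "(\<Sum>j\<in>T - S k. (cmod (x j))\<^sup>2) = (\<Sum>j\<in>T - S k. (cmod (yy j))\<^sup>2)"
    unfolding yy_def by (intro sum.cong) auto
  also have "\<dots> \<le> (\<Sum>j\<in>?A. (cmod (yy j))\<^sup>2)" using finA by (intro sum_mono2) auto
  finally have m1: "(\<Sum>j\<in>T - S k. (cmod (x j))\<^sup>2) \<le> (\<Sum>j\<in>?A. (cmod (yy j))\<^sup>2)" .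
  have AN: "?A \<subseteq> {1..N}" using T S_sub by auto
  have r: "a * (\<Sum>j\<in>?A. (cmod (yy j))\<^sup>2) \<le> nsq m \<xi> (comb \<phi> ?A yy)" using AN cT by (rule rip_lo)
  have "dnorm m \<xi> (comb \<phi> ?A yy) \<le> dnorm m \<xi> (F k) + dnorm m \<xi> (\<lambda>y. f0 y - comb \<phi> T x y)"
    unfolding eq by (rule dnorm_triangle_diff)
  then have "nsq m \<xi> (comb \<phi> ?A yy) \<le> (dnorm m \<xi> (F k) + dnorm m \<xi> (\<lambda>y. f0 y - comb \<phi> T x y))\<^sup>2"
    by (metis dnorm_nonneg dnorm_sq power_mono)
  also have "\<dots> \<le> 2 * E k + 2 * \<sigma>2" by (metis sq_sum_le dnorm_sq)
  finally have "nsq m \<xi> (comb \<phi> ?A yy) \<le> 2 * E k + 2 * \<sigma>2" .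
  moreover have "a * (\<Sum>j\<in>T - S k. (cmod (x j))\<^sup>2) \<le> a * (\<Sum>j\<in>?A. (cmod (yy j))\<^sup>2)" using m1 a_pos by simp
  ultimately show ?thesis using r by linarith
qed

end

end


lemma sorted_enum:
  fixes w :: "nat \<Rightarrow> real"
  assumes "finite R"
  shows "\<exists>e. bij_betw e {..<card R} R \<and> (\<forall>i j. i \<le> j \<longrightarrow> j < card R \<longrightarrow> w (e j) \<le> w (e i))"
proof -
  define xs where "xs = sort_key (\<lambda>j. - w j) (sorted_list_of_set R)"
  have d: "distinct xs" and st: "set xs = R" and l: "length xs = card R"
    using assms by (auto simp: xs_def)
  have so: "sorted (map (\<lambda>j. - w j) xs)" unfolding xs_def by simp
  have "bij_betw ((!) xs) {..<card R} R" using d st l by (intro bij_betw_nth) auto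
  moreover have "w (xs ! j) \<le> w (xs ! i)" if "i \<le> j" "j < card R" for i j
  proof -
    have "map (\<lambda>j. - w j) xs ! i \<le> map (\<lambda>j. - w j) xs ! j"
      using sorted_nth_mono[OF so that(1)] that l by simp
    then show ?thesis using that l by simp
  qed
  ultimately show ?thesis by blast
qed

lemma block_bound:
  fixes f :: "nat \<Rightarrow> real"
  assumes "l \<le> l'" "l < s0" and anti: "\<And>q. l \<le> q \<Longrightarrow> q < s0 \<Longrightarrow> f q \<le> f l" and nn: "0 \<le> f l"
  shows "(\<Sum>q\<in>{l..<s0}. f q) - (\<Sum>q\<in>{l'..<s0}. f q) \<le> real (l' - l) * f l"
proof -
  define m where "m = min l' s0"
  have "{l..<s0} = {l..<m} \<union> {m..<s0}" using assms unfolding m_def by auto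
  then have "(\<Sum>q\<in>{l..<s0}. f q) = (\<Sum>q\<in>{l..<m}. f q) + (\<Sum>q\<in>{m..<s0}. f q)"
    by (simp add: sum.union_disjoint ivl_disj_int)
  moreover have "(\<Sum>q\<in>{m..<s0}. f q) = (\<Sum>q\<in>{l'..<s0}. f q)"
    unfolding m_def by (cases "l' \<le> s0") auto
  moreover have "(\<Sum>q\<in>{l..<m}. f q) \<le> (\<Sum>q\<in>{l..<m}. f l)"
    using anti unfolding m_def by (intro sum_mono) auto
  moreover have "(\<Sum>q\<in>{l..<m}. f l) \<le> real (l' - l) * f l"
  proof -
    have "(\<Sum>q\<in>{l..<m}. f l) = real (m - l) * f l" by simp
    moreover note nn
    moreover have "m - l \<le> l' - l" unfolding m_def by simp
    ultimately show ?thesis by (metis mult_right_mono of_nat_le_iff)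
  qed
  ultimately show ?thesis by linarith
qed

lemma abstract_omp:
  fixes E :: "nat \<Rightarrow> real" and R :: "nat \<Rightarrow> nat set" and w :: "nat \<Rightarrow> real"
    and a b \<sigma>2 :: real and c' K :: nat
  assumes ab: "0 < a" "a \<le> b" and s2: "0 \<le> \<sigma>2"
    and w0: "\<And>j. 0 \<le> w j"
    and Rfin: "\<And>k. finite (R k)"
    and Rmono: "\<And>k k'. k \<le> k' \<Longrightarrow> R k' \<subseteq> R k"
    and Emono: "\<And>k k'. k \<le> k' \<Longrightarrow> E k' \<le> E k"
    and H1: "\<And>k. k \<le> K \<Longrightarrow> a * (\<Sum>j\<in>R k. w j) \<le> 2 * E k + 2 * \<sigma>2"
    and H2: "\<And>k. k \<le> K \<Longrightarrow> E k \<le> 2 * \<sigma>2 + 2 * b * (\<Sum>j\<in>R k. w j)"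
    and H3: "\<And>k0 U n. U \<subseteq> R k0 \<Longrightarrow> c' * card U \<le> n \<Longrightarrow> k0 + n \<le> K \<Longrightarrow>
              E (k0 + n) \<le> 2 * \<sigma>2 + 2 * b * (\<Sum>j\<in>R k0 - U. w j) + a / (64 * b) * E k0"
  shows "card (R k) \<le> s \<Longrightarrow> k + 8 * c' * s \<le> K \<Longrightarrow> E (k + 8 * c' * s) \<le> 12 * \<sigma>2"
proof (induction s arbitrary: k rule: less_induct)
  case (less s)
  define s0 where "s0 = card (R k)"
  have s0s: "s0 \<le> s" using less.prems s0_def by simp
  have kK: "k \<le> K" using less.prems by simp
  have bpos: "0 < b" using ab by simp
  define \<epsilon> where "\<epsilon> = a / (32 * b)"
  define \<theta> where "\<theta> = a / (64 * b)"
  have \<epsilon>_pos: "0 < \<epsilon>" using ab unfolding \<epsilon>_def by simp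
  have \<epsilon>_le: "\<epsilon> \<le> 1/32" using ab unfolding \<epsilon>_def by (simp add: field_simps)
  have \<theta>_pos: "0 \<le> \<theta>" using ab unfolding \<theta>_def by simp
  define ms where "ms A = (\<Sum>j\<in>A. w j)" for A
  show ?case
  proof (cases "2 * b * ms (R k) \<le> 10 * \<sigma>2")
    case True
    then have "E k \<le> 12 * \<sigma>2" using H2[OF kK] unfolding ms_def by linarith
    then show ?thesis using Emono[of k "k + 8 * c' * s"] by simp
  next
    case False
    have mpos: "0 < ms (R k)"
    proof (rule ccontr)
      assume "\<not> 0 < ms (R k)"
      then have "2 * b * ms (R k) \<le> 0" using bpos by (simp add: mult_nonneg_nonpos)
      then show False using False s2 by linarith
    qed
    obtain e where e0: "bij_betw e {..<card (R k)} (R k)"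
        and eo0: "\<forall>i j. i \<le> j \<longrightarrow> j < card (R k) \<longrightarrow> w (e j) \<le> w (e i)"
      using sorted_enum[OF Rfin[of k], of w] by blast
    have e: "bij_betw e {..<s0} (R k)" using e0 s0_def by simp
    have eo': "\<forall>i j. i \<le> j \<longrightarrow> j < s0 \<longrightarrow> w (e j) \<le> w (e i)" using eo0 s0_def by simp
    have eo: "w (e j) \<le> w (e i)" if "i \<le> j" "j < s0" for i j using eo' that by simp
    have inj: "inj_on e {..<s0}" using e by (rule bij_betw_imp_inj_on)
    have img: "e ` {..<s0} = R k" using e by (rule bij_betw_imp_surj_on)
    define tt where "tt i = (\<Sum>q\<in>{2^i - 1..<s0}. w (e q))" for i :: nat
    define U where "U i = e ` ({..<2^i - 1} \<inter> {..<s0})" for i :: nat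
    have tt_nn: "0 \<le> tt i" for i unfolding tt_def by (intro sum_nonneg) (simp add: w0)
    have mass_tail: "ms (R k - U i) = tt i" for i
    proof -
      have "R k - U i = e ` {..<s0} - e ` ({..<2^i - 1} \<inter> {..<s0})" unfolding U_def img ..
      also have "\<dots> = e ` ({..<s0} - ({..<2^i - 1} \<inter> {..<s0}))"
        by (rule inj_on_image_set_diff[OF inj, symmetric]) auto
      also have "{..<s0} - ({..<2^i - 1} \<inter> {..<s0}) = {2^i - 1..<s0}" by auto
      finally have eq: "R k - U i = e ` {2^i - 1..<s0}" .
      have "inj_on e {2^i - 1..<s0}" using inj by (rule inj_on_subset) auto
      then show ?thesis unfolding eq ms_def tt_def by (simp add: sum.reindex)
    qed
    have cardU: "card (U i) \<le> 2^i - 1" for i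
    proof -
      have "card (U i) \<le> card ({..<2^i - 1} \<inter> {..<s0::nat})" unfolding U_def by (rule card_image_le) simp
      also have "\<dots> \<le> card {..<2^i - 1::nat}" by (intro card_mono) auto
      finally show ?thesis by simp
    qed
    have tt0: "tt 0 = ms (R k)" using mass_tail[of 0] unfolding U_def by simp
    have tt_big: "s0 \<le> 2^i - 1 \<Longrightarrow> tt i = 0" for i unfolding tt_def by simp
    have ex: "\<exists>i. 1 \<le> i \<and> tt i < \<epsilon> * tt (i - 1)"
    proof (rule ccontr)
      assume "\<not> ?thesis"
      then have ge: "1 \<le> i \<Longrightarrow> \<epsilon> * tt (i - 1) \<le> tt i" for i by (simp add: not_less)
      have pw: "\<epsilon> ^ i * tt 0 \<le> tt i" for i
      proof (induction i)
        case 0 then show ?case by simp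
      next
        case (Suc i)
        have "\<epsilon> ^ Suc i * tt 0 = \<epsilon> * (\<epsilon> ^ i * tt 0)" by simp
        also have "\<dots> \<le> \<epsilon> * tt i" using Suc \<epsilon>_pos by (intro mult_left_mono) auto
        also have "\<dots> \<le> tt (Suc i)" using ge[of "Suc i"] by simp
        finally show ?case .
      qed
      have "s0 < 2 ^ s0" by (rule less_exp)
      then have "s0 \<le> 2 ^ s0 - 1" by linarith
      then have "tt s0 = 0" by (rule tt_big)
      moreover have "0 < \<epsilon> ^ s0 * tt 0" using \<epsilon>_pos mpos tt0 by simp
      ultimately show False using pw[of s0] by simp
    qed
    define I where "I = (LEAST i. 1 \<le> i \<and> tt i < \<epsilon> * tt (i - 1))"
    have I1: "1 \<le> I" and It: "tt I < \<epsilon> * tt (I - 1)"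
      using LeastI_ex[OF ex] unfolding I_def by auto
    have Ibelow: "\<epsilon> * tt (i - 1) \<le> tt i" if "1 \<le> i" "i < I" for i
      using not_less_Least[of i "\<lambda>i. 1 \<le> i \<and> tt i < \<epsilon> * tt (i - 1)"] that unfolding I_def by force
    have ttpos: "0 < tt (I - 1)"
    proof (rule ccontr)
      assume "\<not> 0 < tt (I - 1)"
      then have "tt (I - 1) = 0" using tt_nn[of "I - 1"] by simp
      then show False using It tt_nn[of I] by simp
    qed
    define j where "j = (2::nat) ^ (I - 1)"
    have j1: "1 \<le> j" unfolding j_def by simp
    have js0: "j \<le> s0"
    proof (rule ccontr)
      assume "\<not> j \<le> s0"
      then have "s0 \<le> 2 ^ (I - 1) - 1" unfolding j_def by simp
      then show False using tt_big ttpos by simp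
    qed
    have II1: "Suc I = (I - 1) + 2" "I = (I - 1) + 1" using I1 by simp_all
    have jI: "(2::nat) ^ Suc I = 4 * j" unfolding j_def by (subst II1(1)) (simp add: power_add)
    have jI': "(2::nat) ^ I = 2 * j" unfolding j_def by (subst II1(2)) (simp add: power_add)
    define KK where "KK i = k + c' * (2 ^ Suc i - 2)" for i :: nat
    have KK0: "KK 0 = k" unfolding KK_def by simp
    have KKSuc: "KK (Suc i) = KK i + c' * 2 ^ Suc i" for i
    proof -
      have "(2::nat) \<le> 2 ^ Suc i" by simp
      then have h: "(2::nat) ^ Suc (Suc i) - 2 = (2 ^ Suc i - 2) + 2 ^ Suc i" by simp
      show ?thesis unfolding KK_def h add_mult_distrib2 by (simp only: add.assoc)
    qed
    have KKmono: "KK i \<le> KK i'" if "i \<le> i'" for i i'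
    proof -
      have "(2::nat) ^ Suc i \<le> 2 ^ Suc i'" using that by (intro power_increasing) auto
      then show ?thesis unfolding KK_def by (intro add_left_mono mult_le_mono2 diff_le_mono)
    qed
    have KKI: "KK I \<le> k + 4 * c' * j" unfolding KK_def jI by simp
    have KKs: "KK I \<le> k + 8 * c' * s"
    proof -
      have "4 * c' * j \<le> 8 * c' * s" using js0 s0s by (simp add: mult_le_mono)
      then show ?thesis using KKI by linarith
    qed
    have KKK: "KK I \<le> K" using KKs less.prems(2) by linarith
    have sub: "E (KK (Suc i)) \<le> 2 * \<sigma>2 + 2 * b * tt (Suc i) + \<theta> * E (KK i)" if "i < I" for i
    proof -
      define V where "V = U (Suc i) \<inter> R (KK i)"
      have "card V \<le> card (U (Suc i))" unfolding V_def U_def by (intro card_mono) auto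
      then have "card V \<le> 2 ^ Suc i" using cardU[of "Suc i"] by linarith
      then have cV: "c' * card V \<le> c' * 2 ^ Suc i" by simp
      have "KK i + c' * 2 ^ Suc i \<le> K" using KKSuc[of i] KKmono[of "Suc i" I] that KKK by simp
      from H3[of V "KK i", OF _ cV this]
      have h: "E (KK (Suc i)) \<le> 2 * \<sigma>2 + 2 * b * ms (R (KK i) - V) + \<theta> * E (KK i)"
        unfolding V_def KKSuc \<theta>_def ms_def by auto
      have "R (KK i) - V \<subseteq> R k - U (Suc i)" unfolding V_def using Rmono[of k "KK i"] KK0 KKmono[of 0 i] by auto
      then have "ms (R (KK i) - V) \<le> ms (R k - U (Suc i))" unfolding ms_def
        using Rfin[of k] w0 by (intro sum_mono2) auto
      then have "ms (R (KK i) - V) \<le> tt (Suc i)" using mass_tail by simp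
      then have "2 * b * ms (R (KK i) - V) \<le> 2 * b * tt (Suc i)" using bpos by (intro mult_left_mono) auto
      then show ?thesis using h by linarith
    qed
    have \<theta>b: "\<theta> * (4 * \<sigma>2 + 4 * b * x) \<le> \<sigma>2 + a / 16 * x" if "0 \<le> x" for x
    proof -
      have "\<theta> * (4 * b * x) = a / 16 * x" unfolding \<theta>_def using bpos by (simp add: field_simps)
      moreover have "\<theta> * (4 * \<sigma>2) \<le> \<sigma>2"
      proof -
        have "\<theta> \<le> 1/64" unfolding \<theta>_def using ab by (simp add: field_simps)
        then have "\<theta> * (4 * \<sigma>2) \<le> 1/64 * (4 * \<sigma>2)" using s2 by (intro mult_right_mono) auto
        then show ?thesis using s2 by linarith
      qed
      moreover have "\<theta> * (4 * \<sigma>2 + 4 * b * x) = \<theta> * (4 * \<sigma>2) + \<theta> * (4 * b * x)" by (rule distrib_left)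
      ultimately show ?thesis by linarith
    qed
    have inv: "i \<le> I - 1 \<Longrightarrow> E (KK i) \<le> 4 * \<sigma>2 + 4 * b * tt i" for i
    proof (induction i)
      case 0
      have "E k \<le> 2 * \<sigma>2 + 2 * b * tt 0" using H2[OF kK] tt0 unfolding ms_def by simp
      moreover have "0 \<le> b * tt 0" using bpos tt_nn by simp
      ultimately show ?case using KK0 s2 by simp
    next
      case (Suc i)
      then have iI: "i < I" "Suc i < I" using I1 by auto
      have ih: "E (KK i) \<le> 4 * \<sigma>2 + 4 * b * tt i" using Suc by simp
      have "E (KK (Suc i)) \<le> 2 * \<sigma>2 + 2 * b * tt (Suc i) + \<theta> * E (KK i)" using sub iI by blast
      also have "\<dots> \<le> 2 * \<sigma>2 + 2 * b * tt (Suc i) + \<theta> * (4 * \<sigma>2 + 4 * b * tt i)"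
        using ih \<theta>_pos by (simp add: mult_left_mono)
      also have "\<dots> \<le> 2 * \<sigma>2 + 2 * b * tt (Suc i) + (\<sigma>2 + a / 16 * tt i)"
        using \<theta>b[OF tt_nn] by simp
      also have "a / 16 * tt i \<le> 2 * b * tt (Suc i)"
      proof -
        have "\<epsilon> * tt i \<le> tt (Suc i)" using Ibelow[of "Suc i"] iI by simp
        then have "a * tt i \<le> 32 * b * tt (Suc i)" unfolding \<epsilon>_def using bpos by (simp add: field_simps)
        then show ?thesis by simp
      qed
      finally show ?case using s2 by simp
    qed
    have final: "E (KK I) \<le> 4 * \<sigma>2 + a / 8 * tt (I - 1)"
    proof -
      have II: "Suc (I - 1) = I" using I1 by simp
      have "E (KK I) \<le> 2 * \<sigma>2 + 2 * b * tt I + \<theta> * E (KK (I - 1))"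
        using sub[of "I - 1"] II I1 by simp
      also have "\<dots> \<le> 2 * \<sigma>2 + 2 * b * tt I + \<theta> * (4 * \<sigma>2 + 4 * b * tt (I - 1))"
        using inv[of "I - 1"] \<theta>_pos by (simp add: mult_left_mono)
      also have "\<dots> \<le> 2 * \<sigma>2 + 2 * b * tt I + (\<sigma>2 + a / 16 * tt (I - 1))"
        using \<theta>b[OF tt_nn] by simp
      also have "2 * b * tt I \<le> a / 16 * tt (I - 1)"
      proof -
        have "2 * b * tt I \<le> 2 * b * (\<epsilon> * tt (I - 1))" using It bpos by simp
        also have "\<dots> = a / 16 * tt (I - 1)" unfolding \<epsilon>_def using bpos by (simp add: field_simps)
        finally show ?thesis .
      qed
      finally show ?thesis using s2 by simp
    qed
    show ?thesis
    proof (cases "a * tt (I - 1) \<le> 64 * \<sigma>2")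
      case True
      then have "E (KK I) \<le> 12 * \<sigma>2" using final by simp
      then show ?thesis using Emono[OF KKs] by simp
    next
      case False
      define R' where "R' = R (KK I)"
      have "a * ms R' \<le> 2 * E (KK I) + 2 * \<sigma>2" using H1[OF KKK] unfolding R'_def ms_def .
      also have "\<dots> \<le> 10 * \<sigma>2 + a / 4 * tt (I - 1)" using final by simp
      finally have "a * ms R' \<le> 10 * \<sigma>2 + a / 4 * tt (I - 1)" .
      then have "a * (32 * ms R') < a * (13 * tt (I - 1))" using False by (simp add: algebra_simps)
      then have "32 * ms R' < 13 * tt (I - 1)" using ab(1) by simp
      then have msR': "ms R' < 26 / 64 * tt (I - 1)" by simp
      define \<mu> where "\<mu> = w (e (j - 1))"
      have blk: "tt (I - 1) - tt I \<le> real j * \<mu>"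
      proof -
        have "(\<Sum>q\<in>{j - 1..<s0}. w (e q)) - (\<Sum>q\<in>{2 * j - 1..<s0}. w (e q)) \<le> real (2 * j - 1 - (j - 1)) * w (e (j - 1))"
          using js0 j1 by (intro block_bound) (auto intro: eo w0)
        moreover have "2 * j - 1 - (j - 1) = j" using j1 by simp
        ultimately show ?thesis unfolding tt_def \<mu>_def j_def jI' by simp
      qed
      have "\<epsilon> * tt (I - 1) \<le> 1/32 * tt (I - 1)" using \<epsilon>_le tt_nn by (intro mult_right_mono) auto
      then have "31 / 32 * tt (I - 1) < real j * \<mu>" using blk It by linarith
      then have \<mu>pos: "0 < \<mu>"
      proof -
        assume h: "31 / 32 * tt (I - 1) < real j * \<mu>"
        show "0 < \<mu>"
        proof (rule ccontr)
          assume "\<not> 0 < \<mu>"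
          then have "real j * \<mu> \<le> 0" by (simp add: mult_nonneg_nonpos)
          then show False using h ttpos by linarith
        qed
      qed
      define W where "W = e ` {..<j}"
      have Wsub: "W \<subseteq> R k" unfolding W_def img[symmetric] using js0 by auto
      have cardW: "card W = j" unfolding W_def using inj js0 by (subst card_image) (auto intro: inj_on_subset)
      have Wge: "\<mu> \<le> w y" if "y \<in> W" for y
        using that js0 eo unfolding W_def \<mu>_def by auto
      have finR': "finite R'" unfolding R'_def by (rule Rfin)
      have "real (card (R' \<inter> W)) * \<mu> \<le> ms (R' \<inter> W)" unfolding ms_def
        using Wge by (intro sum_bounded_below) auto
      also have "\<dots> \<le> ms R'" unfolding ms_def using finR' w0 by (intro sum_mono2) auto
      finally have "real (card (R' \<inter> W)) * \<mu> < 26 / 64 * tt (I - 1)" using msR' by linarith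
      also have "26 / 64 * tt (I - 1) \<le> 1 / 2 * (real j * \<mu>)"
        using \<open>31 / 32 * tt (I - 1) < real j * \<mu>\<close> ttpos by linarith
      finally have "real (2 * card (R' \<inter> W)) < real j" using \<mu>pos by (simp add: field_simps)
      then have cw: "2 * card (R' \<inter> W) < j" by linarith
      have R'sub: "R' \<subseteq> R k" unfolding R'_def using Rmono[of k "KK I"] KK0 KKmono[of 0 I] by simp
      have "card R' \<le> card (R' \<inter> W) + card (R' - W)"
      proof -
        have "R' = (R' \<inter> W) \<union> (R' - W)" by auto
        then have "card R' = card ((R' \<inter> W) \<union> (R' - W))" by simp
        also have "\<dots> \<le> card (R' \<inter> W) + card (R' - W)" by (rule card_Un_le)
        finally show ?thesis .
      qed
      also have "card (R' - W) \<le> card (R k - W)" using R'sub Rfin[of k] by (intro card_mono) auto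
      also have "card (R k - W) = s0 - j" using card_Diff_subset[OF finite_subset[OF Wsub Rfin[of k]] Wsub] cardW s0_def by simp
      finally have cR': "card R' \<le> card (R' \<inter> W) + (s0 - j)" by simp
      define s' where "s' = card R'"
      have ss: "2 * s' + j < 2 * s0" using cR' cw js0 unfolding s'_def by linarith
      then have s's: "s' < s" using s0s by linarith
      have le: "KK I + 8 * c' * s' \<le> k + 8 * c' * s"
      proof -
        have "4 * c' * j + 8 * c' * s' = 4 * c' * (j + 2 * s')" by (simp add: algebra_simps)
        also have "\<dots> \<le> 4 * c' * (2 * s)" using ss s0s by (intro mult_le_mono2) linarith
        finally show ?thesis using KKI by linarith
      qed
      have "E (KK I + 8 * c' * s') \<le> 12 * \<sigma>2"
        using less.IH[OF s's, of "KK I"] le less.prems(2) unfolding s'_def R'_def by simp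
      then show ?thesis using Emono[OF le] by simp
    qed
  qed
qed



lemma pt_bound:
  fixes y l p :: real
  assumes "0 \<le> y" "0 < l" "2 \<le> p"
  shows "y powr 2 \<le> l powr 2 + l powr (2 - p) * y powr p"
proof (cases "y \<le> l")
  case True
  then have "y powr 2 \<le> l powr 2" using assms by (intro powr_mono2) auto
  moreover have "0 \<le> l powr (2 - p) * y powr p" by simp
  ultimately show ?thesis by linarith
next
  case False
  then have yl: "l < y" by simp
  have "l powr (p - 2) \<le> y powr (p - 2)" using assms yl by (intro powr_mono2) auto
  then have "y powr 2 * l powr (p - 2) \<le> y powr 2 * y powr (p - 2)" by (intro mult_left_mono) auto
  also have "\<dots> = y powr p" by (simp flip: powr_add)
  finally have "y powr 2 * l powr (p - 2) \<le> y powr p" .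
  then have "l powr (2 - p) * (y powr 2 * l powr (p - 2)) \<le> l powr (2 - p) * y powr p"
    by (intro mult_left_mono) auto
  moreover have "l powr (2 - p) * (y powr 2 * l powr (p - 2)) = y powr 2"
  proof -
    have "l powr (2 - p) * l powr (p - 2) = 1" using assms by (simp flip: powr_add)
    then show ?thesis by (simp add: mult_ac)
  qed
  moreover have "0 \<le> l powr 2" by simp
  ultimately show ?thesis by linarith
qed

text \<open>Abstract mean version: if a mean functional is linear-ish, get L2 <= sqrt 2 * Lp.\<close>
lemma mean_bound:
  fixes A B p :: real
  assumes p: "2 \<le> p" and A0: "0 \<le> A" and B0: "0 \<le> B"
    and hyp: "\<And>l. 0 < l \<Longrightarrow> B \<le> l powr 2 + l powr (2 - p) * A"
  shows "B powr (1/2) \<le> sqrt 2 * A powr (1/p)"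
proof (cases "A = 0")
  case True
  have "B \<le> 0"
  proof (rule field_le_epsilon)
    fix e :: real assume e: "0 < e"
    have "B \<le> (sqrt e) powr 2" using hyp[of "sqrt e"] e True by simp
    then show "B \<le> 0 + e" using e by (simp add: powr_numeral)
  qed
  then show ?thesis using B0 True by simp
next
  case False
  then have Ap: "0 < A" using A0 by simp
  define l where "l = A powr (1/p)"
  have lp: "0 < l" unfolding l_def using Ap by simp
  have "l powr p = A" unfolding l_def using Ap p by (simp add: powr_powr)
  then have "l powr (2 - p) * A = l powr 2"
    using lp by (metis add_diff_cancel_left' diff_add_cancel powr_add)
  then have "B \<le> 2 * l powr 2" using hyp[OF lp] by simp
  then have "B powr (1/2) \<le> (2 * l powr 2) powr (1/2)" using B0 by (intro powr_mono2) auto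
  also have "\<dots> = sqrt 2 * l" using lp by (simp add: powr_mult powr_powr powr_half_sqrt)
  finally show ?thesis unfolding l_def .
qed

context
  fixes M :: "'b::topological_space measure" and \<Omega> :: "'b set"
  assumes ps: "prob_space M" and sp: "space M = \<Omega>" and sts: "sets M = sets (restrict_space borel \<Omega>)"
    and cpt: "compact \<Omega>"
begin

lemma meas_cont: "continuous_on \<Omega> h \<Longrightarrow> (h :: 'b \<Rightarrow> complex) \<in> borel_measurable M"
  using borel_measurable_continuous_on_restrict measurable_cong_sets[OF sts refl] by blast

lemma int_cont:
  assumes h: "continuous_on \<Omega> (h :: 'b \<Rightarrow> complex)" and q: "0 \<le> q"
  shows "integrable M (\<lambda>x. cmod (h x) powr q)"
proof -
  interpret prob_space M by (rule ps)
  have "compact ((\<lambda>x. cmod (h x)) ` \<Omega>)"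
    using h cpt by (intro compact_continuous_image continuous_intros)
  then obtain B0 where B0: "\<And>x. x \<in> \<Omega> \<Longrightarrow> cmod (h x) \<le> B0"
    using compact_imp_bounded bounded_real by (metis abs_le_D1 image_eqI)
  have "AE x in M. norm (cmod (h x) powr q) \<le> B0 powr q"
  proof (rule AE_I2)
    fix x assume "x \<in> space M"
    then have "cmod (h x) \<le> B0" using B0 sp by auto
    then show "norm (cmod (h x) powr q) \<le> B0 powr q" using q by (simp add: powr_mono2)
  qed
  moreover have "(\<lambda>x. cmod (h x) powr q) \<in> borel_measurable M"
    using meas_cont[OF h] by measurable
  ultimately show ?thesis by (rule integrable_const_bound)
qed

lemma Lp_nonneg: "0 \<le> Lp_norm M p h"
  unfolding Lp_norm_def by simp

lemma L2_le_Lp: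
  assumes h: "continuous_on \<Omega> (h :: 'b \<Rightarrow> complex)" and p: "2 \<le> p"
  shows "Lp_norm M 2 h \<le> sqrt 2 * Lp_norm M p h"
proof -
  interpret prob_space M by (rule ps)
  let ?A = "\<integral>x. cmod (h x) powr p \<partial>M"
  let ?B = "\<integral>x. cmod (h x) powr 2 \<partial>M"
  have iA: "integrable M (\<lambda>x. cmod (h x) powr p)" using int_cont[OF h] p by simp
  have iB: "integrable M (\<lambda>x. cmod (h x) powr 2)" using int_cont[OF h, of 2] by simp
  have "?B powr (1/2) \<le> sqrt 2 * ?A powr (1/p)"
  proof (rule mean_bound[OF p])
    show "0 \<le> ?A" "0 \<le> ?B" by simp_all
    fix l :: real assume l: "0 < l"
    have "?B \<le> (\<integral>x. l powr 2 + l powr (2 - p) * cmod (h x) powr p \<partial>M)"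
      using iA iB pt_bound[OF _ l p] by (intro integral_mono) auto
    also have "\<dots> = l powr 2 + l powr (2 - p) * ?A"
      using iA by (simp add: prob_space)
    finally show "?B \<le> l powr 2 + l powr (2 - p) * ?A" .
  qed
  then show ?thesis unfolding Lp_norm_def by simp
qed

lemma Lp_quasi_tri:
  assumes h1: "continuous_on \<Omega> (h1 :: 'b \<Rightarrow> complex)" and h2: "continuous_on \<Omega> h2" and p: "1 \<le> p"
  shows "Lp_norm M p (\<lambda>x. h1 x - h2 x) \<le> 4 * (Lp_norm M p h1 + Lp_norm M p h2)"
proof -
  interpret prob_space M by (rule ps)
  let ?A1 = "\<integral>x. cmod (h1 x) powr p \<partial>M"
  let ?A2 = "\<integral>x. cmod (h2 x) powr p \<partial>M"
  let ?A = "\<integral>x. cmod (h1 x - h2 x) powr p \<partial>M"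
  have i1: "integrable M (\<lambda>x. cmod (h1 x) powr p)" using int_cont[OF h1] p by simp
  have i2: "integrable M (\<lambda>x. cmod (h2 x) powr p)" using int_cont[OF h2] p by simp
  have h12: "continuous_on \<Omega> (\<lambda>x. h1 x - h2 x)" using h1 h2 by (intro continuous_intros)
  have i: "integrable M (\<lambda>x. cmod (h1 x - h2 x) powr p)" using int_cont[OF h12] p by simp
  have pw: "cmod (y1 - y2) powr p \<le> 2 powr p * (cmod y1 powr p + cmod y2 powr p)" for y1 y2 :: complex
  proof -
    have "cmod (y1 - y2) \<le> 2 * max (cmod y1) (cmod y2)" using norm_triangle_ineq4[of y1 y2] by linarith
    then have "cmod (y1 - y2) powr p \<le> (2 * max (cmod y1) (cmod y2)) powr p" using p by (intro powr_mono2) auto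
    also have "\<dots> = 2 powr p * max (cmod y1) (cmod y2) powr p" by (simp add: powr_mult)
    also have "max (cmod y1) (cmod y2) powr p \<le> cmod y1 powr p + cmod y2 powr p"
      by (cases "cmod y1 \<le> cmod y2") (auto simp: max_def)
    finally show ?thesis by (simp add: mult_left_mono)
  qed
  have "?A \<le> (\<integral>x. 2 powr p * (cmod (h1 x) powr p + cmod (h2 x) powr p) \<partial>M)"
    using i i1 i2 pw by (intro integral_mono) auto
  also have "\<dots> = 2 powr p * (?A1 + ?A2)" using i1 i2 by simp
  finally have A: "?A \<le> 2 powr p * (?A1 + ?A2)" .
  have A10: "0 \<le> ?A1" and A20: "0 \<le> ?A2" by simp_all
  have "?A powr (1/p) \<le> (2 powr p * (?A1 + ?A2)) powr (1/p)" using A p by (intro powr_mono2) auto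
  also have "\<dots> = 2 * (?A1 + ?A2) powr (1/p)" using p by (simp add: powr_mult powr_powr)
  also have "(?A1 + ?A2) powr (1/p) \<le> (2 * max ?A1 ?A2) powr (1/p)" using p A10 A20 by (intro powr_mono2) auto
  also have "\<dots> = 2 powr (1/p) * max ?A1 ?A2 powr (1/p)" by (simp add: powr_mult)
  also have "\<dots> \<le> 2 * (?A1 powr (1/p) + ?A2 powr (1/p))"
  proof (rule mult_mono)
    show "2 powr (1/p) \<le> 2" using p powr_le_cancel_iff[of 2 "1/p" 1] by simp
    show "max ?A1 ?A2 powr (1/p) \<le> ?A1 powr (1/p) + ?A2 powr (1/p)"
      by (cases "?A1 \<le> ?A2") (auto simp: max_def)
  qed auto
  finally show ?thesis unfolding Lp_norm_def by simp
qed

end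



lemma comb_cont:
  assumes "J \<subseteq> {1..N}" "\<forall>j\<in>{1..N}. continuous_on \<Omega> (\<phi> j)"
  shows "continuous_on \<Omega> (comb \<phi> J \<beta>)"
  unfolding comb_def using assms by (intro continuous_intros) auto

lemma sum_ext_sq:
  assumes "finite A" "J \<subseteq> A"
  shows "(\<Sum>j\<in>A. (cmod (if j \<in> J then \<beta> j else 0))\<^sup>2) = (\<Sum>j\<in>J. (cmod (\<beta> j))\<^sup>2)"
proof -
  have "(\<Sum>j\<in>A. (cmod (if j \<in> J then \<beta> j else 0))\<^sup>2) = (\<Sum>j\<in>J. (cmod (if j \<in> J then \<beta> j else 0))\<^sup>2)"
    using assms by (intro sum.mono_neutral_right) auto
  then show ?thesis by simp
qed

lemma rip_from:
  fixes M :: "'b measure" and \<phi> :: "nat \<Rightarrow> 'b \<Rightarrow> complex"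
  assumes riesz: "riesz_system M \<phi> N R1 R2" and ud: "universal_discretization M 2 m \<xi> \<phi> N u"
    and uN: "u \<le> N" and J: "J \<subseteq> {1..N}" "card J \<le> u" and R1: "0 \<le> R1"
  shows "R1\<^sup>2 / 2 * (\<Sum>j\<in>J. (cmod (\<beta> j))\<^sup>2) \<le> nsq m \<xi> (comb \<phi> J \<beta>)"
    and "nsq m \<xi> (comb \<phi> J \<beta>) \<le> 3 * R2\<^sup>2 / 2 * (\<Sum>j\<in>J. (cmod (\<beta> j))\<^sup>2)"
    and "(Lp_norm M 2 (comb \<phi> J \<beta>))\<^sup>2 \<le> 2 * nsq m \<xi> (comb \<phi> J \<beta>)"
    and "R1\<^sup>2 * (\<Sum>j\<in>J. (cmod (\<beta> j))\<^sup>2) \<le> (Lp_norm M 2 (comb \<phi> J \<beta>))\<^sup>2"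
proof -
  obtain J' where J': "J \<subseteq> J'" "J' \<subseteq> {1..N}" "card J' = u"
    using exists_subset_between[of J u "{1..N}"] J uN by auto
  define \<beta>' where "\<beta>' = (\<lambda>j. if j \<in> J then \<beta> j else 0)"
  have fJ': "finite J'" using J'(2) finite_subset by blast
  have cJ: "comb \<phi> J \<beta> = comb \<phi> J' \<beta>'" unfolding \<beta>'_def using fJ' J'(1) by (rule comb_extend)
  have cN: "comb \<phi> J \<beta> = comb \<phi> {1..N} \<beta>'" unfolding \<beta>'_def using J(1) by (intro comb_extend) auto
  define L where "L = Lp_norm M 2 (comb \<phi> J \<beta>)"
  define Q where "Q = (\<Sum>j\<in>J. (cmod (\<beta> j))\<^sup>2)"
  have L0: "0 \<le> L" unfolding L_def Lp_norm_def by simp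
  have Q0: "0 \<le> Q" unfolding Q_def by (intro sum_nonneg) auto
  have d: "1/2 * L\<^sup>2 \<le> nsq m \<xi> (comb \<phi> J \<beta>) \<and> nsq m \<xi> (comb \<phi> J \<beta>) \<le> 3/2 * L\<^sup>2"
  proof -
    from ud J' have "let f = (\<lambda>x. \<Sum>j\<in>J'. \<beta>' j * \<phi> j x) in
          (1/2) * Lp_norm M 2 f powr 2 \<le> (\<Sum>j\<in>{1..m}. cmod (f (\<xi> j)) powr 2) / real m
        \<and> (\<Sum>j\<in>{1..m}. cmod (f (\<xi> j)) powr 2) / real m \<le> (3/2) * Lp_norm M 2 f powr 2"
      unfolding universal_discretization_def by blast
    then have "(1/2) * Lp_norm M 2 (comb \<phi> J' \<beta>') powr 2 \<le> nsq m \<xi> (comb \<phi> J' \<beta>')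
        \<and> nsq m \<xi> (comb \<phi> J' \<beta>') \<le> (3/2) * Lp_norm M 2 (comb \<phi> J' \<beta>') powr 2"
      unfolding Let_def nsq_def comb_def by simp
    then show ?thesis using L0 unfolding L_def cJ by (simp add: powr_numeral)
  qed
  have r: "R1 * sqrt Q \<le> L \<and> L \<le> R2 * sqrt Q"
  proof -
    from riesz have "R1 * sqrt (\<Sum>j\<in>{1..N}. (cmod (\<beta>' j))\<^sup>2) \<le> Lp_norm M 2 (\<lambda>x. \<Sum>j\<in>{1..N}. \<beta>' j * \<phi> j x)
      \<and> Lp_norm M 2 (\<lambda>x. \<Sum>j\<in>{1..N}. \<beta>' j * \<phi> j x) \<le> R2 * sqrt (\<Sum>j\<in>{1..N}. (cmod (\<beta>' j))\<^sup>2)"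
      unfolding riesz_system_def by blast
    moreover have "(\<Sum>j\<in>{1..N}. (cmod (\<beta>' j))\<^sup>2) = Q"
      unfolding Q_def \<beta>'_def using J(1) by (intro sum_ext_sq) auto
    moreover have "(\<lambda>x. \<Sum>j\<in>{1..N}. \<beta>' j * \<phi> j x) = comb \<phi> J \<beta>" unfolding cN by (simp add: comb_def)
    ultimately show ?thesis unfolding L_def by simp
  qed
  have lo: "R1\<^sup>2 * Q \<le> L\<^sup>2"
  proof -
    have "(R1 * sqrt Q)\<^sup>2 \<le> L\<^sup>2" using r R1 Q0 by (intro power_mono) auto
    then show ?thesis using Q0 by (simp add: power_mult_distrib)
  qed
  have hi: "L\<^sup>2 \<le> R2\<^sup>2 * Q"
  proof -
    have "L\<^sup>2 \<le> (R2 * sqrt Q)\<^sup>2" using r L0 by (intro power_mono) auto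
    then show ?thesis using Q0 by (simp add: power_mult_distrib)
  qed
  show "R1\<^sup>2 / 2 * (\<Sum>j\<in>J. (cmod (\<beta> j))\<^sup>2) \<le> nsq m \<xi> (comb \<phi> J \<beta>)"
    using lo d unfolding Q_def by linarith
  show "nsq m \<xi> (comb \<phi> J \<beta>) \<le> 3 * R2\<^sup>2 / 2 * (\<Sum>j\<in>J. (cmod (\<beta> j))\<^sup>2)"
    using hi d unfolding Q_def by linarith
  show "(Lp_norm M 2 (comb \<phi> J \<beta>))\<^sup>2 \<le> 2 * nsq m \<xi> (comb \<phi> J \<beta>)"
    using d unfolding L_def by linarith
  show "R1\<^sup>2 * (\<Sum>j\<in>J. (cmod (\<beta> j))\<^sup>2) \<le> (Lp_norm M 2 (comb \<phi> J \<beta>))\<^sup>2"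
    using lo unfolding L_def Q_def .
qed

lemma disc_L2_le_Lp:
  assumes p: "2 \<le> p" and m: "0 < m"
  shows "dnorm m \<xi> h \<le> sqrt 2 * ((\<Sum>j\<in>{1..m}. cmod (h (\<xi> j)) powr p) / real m) powr (1/p)"
proof -
  let ?A = "(\<Sum>j\<in>{1..m}. cmod (h (\<xi> j)) powr p) / real m"
  let ?B = "(\<Sum>j\<in>{1..m}. cmod (h (\<xi> j)) powr 2) / real m"
  have "?B powr (1/2) \<le> sqrt 2 * ?A powr (1/p)"
  proof (rule mean_bound[OF p])
    show "0 \<le> ?A" "0 \<le> ?B" by (simp_all add: sum_nonneg)
    fix l :: real assume l: "0 < l"
    have "(\<Sum>j\<in>{1..m}. cmod (h (\<xi> j)) powr 2) \<le> (\<Sum>j\<in>{1..m}. l powr 2 + l powr (2 - p) * cmod (h (\<xi> j)) powr p)"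
      using pt_bound[OF _ l p] by (intro sum_mono) auto
    also have "\<dots> = real m * l powr 2 + l powr (2 - p) * (\<Sum>j\<in>{1..m}. cmod (h (\<xi> j)) powr p)"
      by (simp add: sum.distrib sum_distrib_left)
    finally show "?B \<le> l powr 2 + l powr (2 - p) * ?A"
      using m by (simp add: field_simps)
  qed
  moreover have "?B powr (1/2) = dnorm m \<xi> h"
    unfolding dnorm_def by (simp add: powr_half_sqrt sum_nonneg)
  ultimately show ?thesis by simp
qed

lemma half_bound:
  fixes P Q p :: real
  assumes "0 \<le> P" "0 \<le> Q" "1 \<le> p"
  shows "P powr (1/p) \<le> 2 * ((1/2) * P + (1/2) * Q) powr (1/p)"
proof -
  have "P powr (1/p) \<le> (2 * ((1/2) * P + (1/2) * Q)) powr (1/p)" using assms by (intro powr_mono2) auto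
  also have "\<dots> = 2 powr (1/p) * ((1/2) * P + (1/2) * Q) powr (1/p)" by (rule powr_mult)
  also have "\<dots> \<le> 2 * ((1/2) * P + (1/2) * Q) powr (1/p)"
  proof (rule mult_right_mono)
    show "2 powr (1/p) \<le> 2" using assms powr_le_cancel_iff[of 2 "1/p" 1] by simp
  qed simp
  finally show ?thesis .
qed



lemma core:
  fixes \<Omega> :: "(nat \<Rightarrow> real) set" and M :: "(nat \<Rightarrow> real) measure"
    and \<phi> :: "nat \<Rightarrow> (nat \<Rightarrow> real) \<Rightarrow> complex" and \<xi> :: "nat \<Rightarrow> (nat \<Rightarrow> real)"
    and f0 :: "(nat \<Rightarrow> real) \<Rightarrow> complex" and F :: "nat \<Rightarrow> (nat \<Rightarrow> real) \<Rightarrow> complex"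
  assumes tR: "0 < t" "0 < R1" "R1 \<le> R2"
    and c'_def: "c' = nat \<lceil>64 * (3 * R2\<^sup>2 / 2) / (R1\<^sup>2 / 2 * (R1\<^sup>2 / 2 * t\<^sup>2))\<rceil>"
    and cpt: "compact \<Omega>" and ps: "prob_space M" and sp: "space M = \<Omega>"
    and sts: "sets M = sets (restrict_space borel \<Omega>)"
    and p: "2 \<le> p"
    and phi: "\<forall>j\<in>{1..N}. continuous_on \<Omega> (\<phi> j) \<and> (\<forall>x\<in>\<Omega>. cmod (\<phi> j x) \<le> 1)"
    and riesz: "riesz_system M \<phi> N R1 R2" and u: "1 \<le> u" "u \<le> N"
    and xi: "\<forall>j\<in>{1..m}. \<xi> j \<in> \<Omega>" and ud: "universal_discretization M 2 m \<xi> \<phi> N u"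
    and nik: "nikolskii M \<phi> N 2 p H u"
    and v: "real v \<le> real u / (1 + real (8 * c'))" and f0: "continuous_on \<Omega> f0"
    and run: "womp_run m \<xi> \<phi> N t f0 g F"
  shows "dnorm m \<xi> (F (8 * c' * v)) \<le> 4 * sigma_disc m \<xi> \<phi> N v f0
       \<and> Lp_norm M p (F (8 * c' * v)) \<le> H * 100 * sigma_xi M m \<xi> p \<phi> N v f0"
proof -
  define a where "a = R1\<^sup>2 / 2"
  define b where "b = 3 * R2\<^sup>2 / 2"
  have a_pos: "0 < a" using tR by (simp add: a_def)
  have ab: "a \<le> b"
  proof -
    have "R1\<^sup>2 \<le> R2\<^sup>2" using tR by (intro power_mono) auto
    moreover have "0 \<le> R2\<^sup>2" by simp
    ultimately show ?thesis unfolding a_def b_def by linarith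
  qed
  have c'_eq: "c' = nat \<lceil>64 * b / (a * (a * t\<^sup>2))\<rceil>" unfolding c'_def a_def b_def ..
  define K where "K = 8 * c' * v"
  have vK: "v + K \<le> u"
  proof -
    have "real v * (1 + real (8 * c')) \<le> real u" using v by (simp add: pos_le_divide_eq)
    then have "real (v + K) \<le> real u" unfolding K_def by (simp add: algebra_simps)
    then show ?thesis by linarith
  qed
  have N1: "0 < N" using u by simp
  have rip_lo: "a * (\<Sum>j\<in>J. (cmod (\<beta> j))\<^sup>2) \<le> nsq m \<xi> (comb \<phi> J \<beta>)"
    if "J \<subseteq> {1..N}" "card J \<le> u" for J \<beta>
    using rip_from(1)[OF riesz ud u(2) that] tR unfolding a_def by simp
  have rip_hi: "nsq m \<xi> (comb \<phi> J \<beta>) \<le> b * (\<Sum>j\<in>J. (cmod (\<beta> j))\<^sup>2)"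
    if "J \<subseteq> {1..N}" "card J \<le> u" for J \<beta>
    using rip_from(2)[OF riesz ud u(2) that] tR unfolding b_def by simp
  have m_pos: "0 < m"
  proof (rule ccontr)
    assume "\<not> 0 < m"
    then have "m = 0" by simp
    have "{1::nat} \<subseteq> {1..N}" "card {1::nat} \<le> u" using N1 u by auto
    from rip_lo[OF this, of "\<lambda>_. 1"] have "a \<le> nsq m \<xi> (comb \<phi> {1} (\<lambda>_. 1))" by simp
    then show False using a_pos \<open>m = 0\<close> by (simp add: nsq_def)
  qed
  have phi_le1: "nsq m \<xi> (\<phi> j) \<le> 1" if "j \<in> {1..N}" for j
  proof -
    have "(\<Sum>i\<in>{1..m}. (cmod (\<phi> j (\<xi> i)))\<^sup>2) \<le> (\<Sum>i\<in>{1..m}. 1)"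
    proof (intro sum_mono)
      fix i assume "i \<in> {1..m}"
      then have "cmod (\<phi> j (\<xi> i)) \<le> 1" using phi xi that by auto
      then show "(cmod (\<phi> j (\<xi> i)))\<^sup>2 \<le> 1" by (simp add: power_le_one)
    qed
    then show ?thesis unfolding nsq_def using m_pos by simp
  qed
  interpret O: omp m \<xi> \<phi> N u t a b f0 g F
    by unfold_locales (use m_pos phi_le1 rip_lo rip_hi run tR a_pos N1 in auto)
  have cardJS: "card (J \<union> O.S k) \<le> u" if "card J = v" "k \<le> K" "finite J" for J k
  proof -
    have "card (J \<union> O.S k) \<le> card J + card (O.S k)" by (rule card_Un_le)
    also have "\<dots> \<le> v + K" using that O.S_card[of k] by simp
    finally show ?thesis using vK by simp
  qed
  have c'_ge: "64 * b / a \<le> real c' * (a * t\<^sup>2)"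
  proof -
    have "64 * b / (a * (a * t\<^sup>2)) \<le> real c'" unfolding c'_eq by (rule real_nat_ceiling_ge)
    then show ?thesis using a_pos tR by (simp add: field_simps)
  qed
  have first: "dnorm m \<xi> (F K) \<le> 4 * dnorm m \<xi> (\<lambda>x. f0 x - comb \<phi> J \<beta> x)"
    if J: "J \<subseteq> {1..N}" "card J = v" for J \<beta>
  proof -
    define \<sigma>2 where "\<sigma>2 = nsq m \<xi> (\<lambda>y. f0 y - comb \<phi> J \<beta> y)"
    define w where "w = (\<lambda>j. (cmod (\<beta> j))\<^sup>2)"
    have finJ: "finite J" using J finite_subset by blast
    have cJ: "card J \<le> u" using J vK by simp
    have H1: "a * (\<Sum>j\<in>J - O.S k. w j) \<le> 2 * nsq m \<xi> (F k) + 2 * \<sigma>2" if "k \<le> K" for k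
      using O.lower[where x = \<beta>, OF J(1) cardJS[OF J(2) that finJ]] unfolding \<sigma>2_def w_def by simp
    have H2: "nsq m \<xi> (F k) \<le> 2 * \<sigma>2 + 2 * b * (\<Sum>j\<in>J - O.S k. w j)" if "k \<le> K" for k
    proof -
      have "nsq m \<xi> (F k) \<le> nsq m \<xi> (\<lambda>y. f0 y - comb \<phi> (J \<inter> O.S k) \<beta> y)" by (rule O.best) auto
      also have "\<dots> \<le> 2 * \<sigma>2 + 2 * b * (\<Sum>j\<in>J - O.S k. w j)"
        using O.upper_gen[where x = \<beta>, OF J(1) cJ] unfolding \<sigma>2_def w_def by simp
      finally show ?thesis .
    qed
    have H3: "nsq m \<xi> (F (k0 + n)) \<le> 2 * \<sigma>2 + 2 * b * (\<Sum>j\<in>(J - O.S k0) - U. w j) + a / (64 * b) * nsq m \<xi> (F k0)"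
      if U: "U \<subseteq> J - O.S k0" and cU: "c' * card U \<le> n" and kn: "k0 + n \<le> K" for k0 U n
    proof (cases "U = {}")
      case True
      have "nsq m \<xi> (F (k0 + n)) \<le> nsq m \<xi> (F k0)" by (rule O.E_mono) simp
      also have "\<dots> \<le> 2 * \<sigma>2 + 2 * b * (\<Sum>j\<in>J - O.S k0. w j)" using H2 kn by simp
      moreover have "0 \<le> a / (64 * b) * nsq m \<xi> (F k0)" using a_pos ab nsq_nonneg[of m \<xi> "F k0"] by simp
      ultimately show ?thesis using True by simp
    next
      case False
      have UN: "U \<subseteq> {1..N}" using U J by auto
      have Jsub: "J \<inter> (O.S k0 \<union> U) \<subseteq> U \<union> O.S k0" by auto
      have cardU: "card (U \<union> O.S k) \<le> u" if "k0 \<le> k" "k < k0 + n" for k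
      proof -
        have "card (U \<union> O.S k) \<le> card (J \<union> O.S k)" using U finJ O.S_finite by (intro card_mono) auto
        also have "\<dots> \<le> u" using cardJS[OF J(2) _ finJ, of k] that kn by simp
        finally show ?thesis .
      qed
      have sst: "nsq m \<xi> (F (k0 + n)) \<le> nsq m \<xi> (\<lambda>x. f0 x - comb \<phi> (J \<inter> (O.S k0 \<union> U)) \<beta> x)
          + nsq m \<xi> (F k0) / (1 + real n * (a * t\<^sup>2) / real (card U))"
        using O.substage[OF UN False Jsub cardU] by blast
      have B: "nsq m \<xi> (\<lambda>x. f0 x - comb \<phi> (J \<inter> (O.S k0 \<union> U)) \<beta> x) \<le> 2 * \<sigma>2 + 2 * b * (\<Sum>j\<in>(J - O.S k0) - U. w j)"
      proof -
        have "J - (O.S k0 \<union> U) = (J - O.S k0) - U" by auto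
        then show ?thesis using O.upper_gen[OF J(1) cJ, of "O.S k0 \<union> U"] unfolding \<sigma>2_def w_def by simp
      qed
      have fin: "nsq m \<xi> (F k0) / (1 + real n * (a * t\<^sup>2) / real (card U)) \<le> a / (64 * b) * nsq m \<xi> (F k0)"
      proof -
        have finU: "finite U" using U finJ finite_subset by blast
        then have cUp: "0 < real (card U)" using False by (simp add: card_gt_0_iff)
        have "real c' * real (card U) \<le> real n" using cU by (metis of_nat_le_iff of_nat_mult)
        then have "real c' \<le> real n / real (card U)" using cUp by (simp add: pos_le_divide_eq)
        then have "real c' * (a * t\<^sup>2) \<le> real n / real (card U) * (a * t\<^sup>2)"
          using a_pos by (intro mult_right_mono) auto
        then have X: "64 * b / a \<le> 1 + real n * (a * t\<^sup>2) / real (card U)" using c'_ge by simp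
        have pb: "0 < 64 * b / a" using a_pos ab by simp
        have E0: "0 \<le> nsq m \<xi> (F k0)" by (rule nsq_nonneg)
        have "nsq m \<xi> (F k0) / (1 + real n * (a * t\<^sup>2) / real (card U)) \<le> nsq m \<xi> (F k0) / (64 * b / a)"
        proof -
          have Xp: "0 < 1 + real n * (a * t\<^sup>2) / real (card U)" using X pb by linarith
          have "0 < (1 + real n * (a * t\<^sup>2) / real (card U)) * (64 * b / a)"
            by (rule mult_pos_pos[OF Xp pb])
          then show ?thesis by (rule divide_left_mono[OF X E0])
        qed
        also have "\<dots> = a / (64 * b) * nsq m \<xi> (F k0)" by simp
        finally show ?thesis .
      qed
      show ?thesis using sst B fin by linarith
    qed
    have card0: "card (J - O.S 0) \<le> v" using J by (simp add: O.S_def)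
    have "nsq m \<xi> (F (0 + 8 * c' * v)) \<le> 12 * \<sigma>2"
    proof (rule abstract_omp[where E = "\<lambda>k. nsq m \<xi> (F k)" and R = "\<lambda>k. J - O.S k" and w = w
          and a = a and b = b and c' = c' and K = K])
      show "0 < a" "a \<le> b" by (rule a_pos, rule ab)
      show "0 \<le> \<sigma>2" unfolding \<sigma>2_def by (rule nsq_nonneg)
      show "\<And>j. 0 \<le> w j" unfolding w_def by simp
      show "\<And>k. finite (J - O.S k)" using finJ by simp
      show "\<And>k k'. k \<le> k' \<Longrightarrow> J - O.S k' \<subseteq> J - O.S k" using O.S_mono by blast
      show "\<And>k k'. k \<le> k' \<Longrightarrow> nsq m \<xi> (F k') \<le> nsq m \<xi> (F k)" by (rule O.E_mono)
      show "\<And>k. k \<le> K \<Longrightarrow> a * (\<Sum>j\<in>J - O.S k. w j) \<le> 2 * nsq m \<xi> (F k) + 2 * \<sigma>2" by (rule H1)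
      show "\<And>k. k \<le> K \<Longrightarrow> nsq m \<xi> (F k) \<le> 2 * \<sigma>2 + 2 * b * (\<Sum>j\<in>J - O.S k. w j)" by (rule H2)
      show "\<And>k0 U n. U \<subseteq> J - O.S k0 \<Longrightarrow> c' * card U \<le> n \<Longrightarrow> k0 + n \<le> K \<Longrightarrow>
              nsq m \<xi> (F (k0 + n)) \<le> 2 * \<sigma>2 + 2 * b * (\<Sum>j\<in>(J - O.S k0) - U. w j) + a / (64 * b) * nsq m \<xi> (F k0)"
        by (rule H3)
      show "card (J - O.S 0) \<le> v" by (rule card0)
      show "0 + 8 * c' * v \<le> K" unfolding K_def by simp
    qed
    then have E12: "nsq m \<xi> (F K) \<le> 12 * \<sigma>2" unfolding K_def by simp
    have "dnorm m \<xi> (F K) = sqrt (nsq m \<xi> (F K))" by (rule dnorm_eq)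
    also have "\<dots> \<le> sqrt (16 * \<sigma>2)"
    proof (rule real_sqrt_le_mono)
      have "0 \<le> \<sigma>2" unfolding \<sigma>2_def by (rule nsq_nonneg)
      then show "nsq m \<xi> (F K) \<le> 16 * \<sigma>2" using E12 by linarith
    qed
    also have "\<dots> = 4 * dnorm m \<xi> (\<lambda>x. f0 x - comb \<phi> J \<beta> x)" unfolding \<sigma>2_def dnorm_eq
      by (simp add: real_sqrt_mult)
    finally show ?thesis .
  qed
  have phicont: "\<forall>j\<in>{1..N}. continuous_on \<Omega> (\<phi> j)" using phi by blast
  have H1: "1 \<le> sqrt 2 * H"
  proof -
    obtain J1 where J1: "{1} \<subseteq> J1" "J1 \<subseteq> {1..N}" "card J1 = u"
      using exists_subset_between[of "{1::nat}" u "{1..N}"] u by auto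
    define \<delta> where "\<delta> = (\<lambda>j::nat. if j \<in> {1} then (1::complex) else 0)"
    have fJ1: "finite J1" using J1 finite_subset by blast
    have fe: "comb \<phi> {1} (\<lambda>_. 1) = comb \<phi> J1 \<delta>" unfolding \<delta>_def using fJ1 J1(1) by (rule comb_extend)
    have mem: "comb \<phi> J1 \<delta> \<in> Sigma_terms \<phi> N u" unfolding Sigma_terms_def comb_def
      by (intro CollectI exI[of _ J1] exI[of _ \<delta>] conjI refl) (use J1 in auto)
    define f where "f = comb \<phi> {1} (\<lambda>_. 1)"
    have nk: "Lp_norm M p f \<le> H * Lp_norm M 2 f" using nik mem unfolding nikolskii_def f_def fe by blast
    have s1: "{1::nat} \<subseteq> {1..N}" "card {1::nat} \<le> u" using N1 u by auto
    have r: "R1\<^sup>2 \<le> (Lp_norm M 2 f)\<^sup>2"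
      using rip_from(4)[OF riesz ud u(2) s1, of "\<lambda>_. 1"] tR unfolding f_def by simp
    have L2p: "0 < Lp_norm M 2 f"
    proof (rule ccontr)
      assume "\<not> 0 < Lp_norm M 2 f"
      then have "Lp_norm M 2 f = 0" using Lp_nonneg[OF ps sp sts cpt, of 2 f] by simp
      then show False using r tR by simp
    qed
    have fc: "continuous_on \<Omega> f" unfolding f_def using s1 phicont by (intro comb_cont)
    have le: "Lp_norm M 2 f \<le> sqrt 2 * Lp_norm M p f" by (rule L2_le_Lp[OF ps sp sts cpt fc p])
    have Lpp: "0 < Lp_norm M p f"
    proof (rule ccontr)
      assume "\<not> 0 < Lp_norm M p f"
      then have "sqrt 2 * Lp_norm M p f \<le> 0" by (simp add: mult_nonneg_nonpos)
      then show False using L2p le by linarith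
    qed
    have "Lp_norm M p f \<le> H * (sqrt 2 * Lp_norm M p f)"
    proof -
      have H0: "0 \<le> H"
      proof (rule ccontr)
        assume "\<not> 0 \<le> H"
        then have "H * Lp_norm M 2 f < 0" using L2p by (simp add: mult_neg_pos)
        then show False using nk Lpp by linarith
      qed
      have "H * Lp_norm M 2 f \<le> H * (sqrt 2 * Lp_norm M p f)" by (rule mult_left_mono[OF le H0])
      then show ?thesis using nk by linarith
    qed
    then have "1 * Lp_norm M p f \<le> (sqrt 2 * H) * Lp_norm M p f" by (simp add: mult_ac)
    then show ?thesis using Lpp by (simp only: mult_le_cancel_right_pos)
  qed
  have Hpos: "0 < H"
  proof (rule ccontr)
    assume "\<not> 0 < H"
    then have "sqrt 2 * H \<le> 0" by (simp add: mult_nonneg_nonpos)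
    then show False using H1 by linarith
  qed
  have second: "Lp_norm M p (F K) \<le> H * 100 * Lp_xi_norm M m \<xi> p (\<lambda>x. f0 x - comb \<phi> J \<beta> x)"
    if J: "J \<subseteq> {1..N}" "card J = v" for J \<beta>
  proof -
    obtain \<gamma> where \<gamma>: "F K = (\<lambda>x. f0 x - comb \<phi> (O.S K) \<gamma> x)" using O.F_rep by blast
    define h1 where "h1 = (\<lambda>x. f0 x - comb \<phi> J \<beta> x)"
    define A where "A = O.S K \<union> J"
    define \<delta> where "\<delta> = (\<lambda>j. (if j \<in> O.S K then \<gamma> j else 0) - (if j \<in> J then \<beta> j else 0))"
    have finJ: "finite J" using J finite_subset by blast
    have finA: "finite A" unfolding A_def using finJ O.S_finite by simp
    define h2 where "h2 = comb \<phi> A \<delta>"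
    have h2eq: "h2 x = comb \<phi> (O.S K) \<gamma> x - comb \<phi> J \<beta> x" for x
    proof -
      have e1: "comb \<phi> (O.S K) \<gamma> = comb \<phi> A (\<lambda>j. if j \<in> O.S K then \<gamma> j else 0)"
        using finA unfolding A_def by (intro comb_extend) auto
      have e2: "comb \<phi> J \<beta> = comb \<phi> A (\<lambda>j. if j \<in> J then \<beta> j else 0)"
        using finA unfolding A_def by (intro comb_extend) auto
      show ?thesis unfolding h2_def \<delta>_def e1 e2 by (simp add: comb_diff)
    qed
    have AN: "A \<subseteq> {1..N}" unfolding A_def using O.S_sub J by auto
    have cardA: "card A \<le> u"
    proof -
      have "card A \<le> card (O.S K) + card J" unfolding A_def by (rule card_Un_le)
      also have "\<dots> \<le> K + v" using O.S_card[of K] J by simp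
      finally show ?thesis using vK by simp
    qed
    obtain J2 where J2: "A \<subseteq> J2" "J2 \<subseteq> {1..N}" "card J2 = u"
      using exists_subset_between[of A u "{1..N}"] cardA u AN by auto
    have fJ2: "finite J2" using J2 finite_subset by blast
    have h2J2: "h2 = comb \<phi> J2 (\<lambda>j. if j \<in> A then \<delta> j else 0)" unfolding h2_def using fJ2 J2(1) by (rule comb_extend)
    have mem2: "h2 \<in> Sigma_terms \<phi> N u" unfolding h2J2 Sigma_terms_def comb_def
      by (intro CollectI exI[of _ J2] exI[of _ "\<lambda>j. if j \<in> A then \<delta> j else 0"] conjI refl) (use J2 in auto)
    have cont1: "continuous_on \<Omega> h1" unfolding h1_def using f0 comb_cont[OF J(1) phicont] by (intro continuous_intros)
    have cont2: "continuous_on \<Omega> h2" unfolding h2_def by (rule comb_cont[OF AN phicont])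
    have Feq: "F K = (\<lambda>x. h1 x - h2 x)" unfolding \<gamma> h1_def using h2eq by auto
    have h2eq': "h2 = (\<lambda>x. h1 x - F K x)" unfolding Feq by simp
    define X where "X = Lp_xi_norm M m \<xi> p h1"
    define IA where "IA = (\<integral>x. cmod (h1 x) powr p \<partial>M)"
    define DA where "DA = (\<Sum>j\<in>{1..m}. cmod (h1 (\<xi> j)) powr p) / real m"
    have IA0: "0 \<le> IA" unfolding IA_def by simp
    have DA0: "0 \<le> DA" unfolding DA_def by (simp add: sum_nonneg)
    have p1: "1 \<le> p" using p by simp
    have X0: "0 \<le> X" unfolding X_def Lp_xi_norm_def by simp
    have T1: "Lp_norm M p (F K) \<le> 4 * (Lp_norm M p h1 + Lp_norm M p h2)"
      unfolding Feq by (rule Lp_quasi_tri[OF ps sp sts cpt cont1 cont2 p1])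
    have T2: "Lp_norm M p h1 \<le> 2 * X"
      using half_bound[OF IA0 DA0 p1] unfolding X_def Lp_xi_norm_def Lp_norm_def IA_def DA_def .
    have T3: "Lp_norm M p h2 \<le> H * Lp_norm M 2 h2" using nik mem2 unfolding nikolskii_def by blast
    have T4: "Lp_norm M 2 h2 \<le> sqrt 2 * dnorm m \<xi> h2"
    proof -
      have "(Lp_norm M 2 h2)\<^sup>2 \<le> 2 * nsq m \<xi> h2" unfolding h2_def using rip_from(3)[OF riesz ud u(2) AN cardA, of \<delta>] tR by simp
      then have "sqrt ((Lp_norm M 2 h2)\<^sup>2) \<le> sqrt (2 * nsq m \<xi> h2)" by (rule real_sqrt_le_mono)
      then show ?thesis using Lp_nonneg[OF ps sp sts cpt, of 2 h2] by (simp add: real_sqrt_mult dnorm_eq)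
    qed
    have T5: "dnorm m \<xi> h2 \<le> dnorm m \<xi> (F K) + dnorm m \<xi> h1"
      unfolding h2eq' using dnorm_triangle_diff[of m \<xi> h1 "F K"] by linarith
    have T6: "dnorm m \<xi> (F K) \<le> 4 * dnorm m \<xi> h1" unfolding h1_def by (rule first[OF J])
    have T7: "dnorm m \<xi> h1 \<le> sqrt 2 * (2 * X)"
    proof -
      have "dnorm m \<xi> h1 \<le> sqrt 2 * DA powr (1/p)" unfolding DA_def by (rule disc_L2_le_Lp[OF p m_pos])
      also have "DA powr (1/p) \<le> 2 * X"
        using half_bound[OF DA0 IA0 p1] unfolding X_def Lp_xi_norm_def IA_def DA_def by (simp add: add.commute)
      finally show ?thesis by simp
    qed
    define r where "r = sqrt (2::real)"
    have r2: "r * r = 2" unfolding r_def by simp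
    have r0: "0 \<le> r" unfolding r_def by simp
    have r1: "r \<le> 3/2" unfolding r_def by (rule real_le_lsqrt) (auto simp: power2_eq_square)
    have d1: "0 \<le> dnorm m \<xi> h1" by (rule dnorm_nonneg)
    have "dnorm m \<xi> h2 \<le> 5 * dnorm m \<xi> h1" using T5 T6 by linarith
    also have "\<dots> \<le> 5 * (r * (2 * X))" using T7 unfolding r_def by linarith
    finally have dh2: "dnorm m \<xi> h2 \<le> 10 * r * X" by simp
    have "H * Lp_norm M 2 h2 \<le> H * (r * dnorm m \<xi> h2)" unfolding r_def
      using mult_left_mono[OF T4, of H] Hpos by simp
    then have "Lp_norm M p h2 \<le> H * (r * dnorm m \<xi> h2)" using T3 by linarith
    also have "\<dots> \<le> H * (r * (10 * r * X))" using dh2 Hpos r0 by (intro mult_left_mono) auto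
    also have "\<dots> = 20 * (H * X)" using r2 by (simp add: algebra_simps)
    finally have Lh2: "Lp_norm M p h2 \<le> 20 * (H * X)" .
    have "1 * X \<le> r * H * X" using H1 X0 unfolding r_def by (intro mult_right_mono) auto
    then have "X \<le> r * H * X" by simp
    also have "\<dots> \<le> 3/2 * H * X" using r1 Hpos X0 by (intro mult_right_mono) auto
    finally have XH: "X \<le> 3/2 * H * X" .
    have XH': "2 * X \<le> 3 * (H * X)" using XH by (simp add: mult_ac)
    have "4 * (Lp_norm M p h1 + Lp_norm M p h2) \<le> 4 * (2 * X + 20 * (H * X))"
      by (intro mult_left_mono add_mono T2 Lh2) auto
    with T1 have "Lp_norm M p (F K) \<le> 4 * (2 * X + 20 * (H * X))" by (rule order_trans)
    also have "\<dots> \<le> 100 * (H * X)" proof -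
      have Y0: "0 \<le> H * X" using Hpos X0 by simp
      have gen: "4 * (2 * X + 20 * Y) \<le> 100 * Y" if "0 \<le> Y" "2 * X \<le> 3 * Y" for Y
      proof -
        have "4 * (2 * X + 20 * Y) = 8 * X + 80 * Y" by simp
        then show ?thesis using that by linarith
      qed
      show ?thesis by (rule gen[OF Y0 XH'])
    qed
    finally show ?thesis unfolding X_def h1_def by (simp add: mult_ac)
  qed
  have Sig: "g' \<in> Sigma_terms \<phi> N v \<Longrightarrow> \<exists>J \<beta>. J \<subseteq> {1..N} \<and> card J = v \<and> g' = comb \<phi> J \<beta>" for g'
    unfolding Sigma_terms_def comb_def by auto
  have ne: "Sigma_terms \<phi> N v \<noteq> {}"
  proof -
    have "v \<le> N" using vK u by simp
    then have "comb \<phi> {1..v} (\<lambda>_. 0) \<in> Sigma_terms \<phi> N v" unfolding Sigma_terms_def comb_def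
      by (intro CollectI exI[of _ "{1..v}"] exI[of _ "\<lambda>_. 0"] conjI refl) auto
    then show ?thesis by blast
  qed
  have D1: "dnorm m \<xi> (F K) / 4 \<le> sigma_disc m \<xi> \<phi> N v f0"
    unfolding sigma_disc_def
  proof (rule cINF_greatest[OF ne])
    fix g' assume "g' \<in> Sigma_terms \<phi> N v"
    then obtain J \<beta> where J: "J \<subseteq> {1..N}" "card J = v" and g': "g' = comb \<phi> J \<beta>" using Sig by blast
    show "dnorm m \<xi> (F K) / 4 \<le> dnorm m \<xi> (\<lambda>x. f0 x - g' x)" using first[OF J, of \<beta>] g' by simp
  qed
  have D2: "Lp_norm M p (F K) / (H * 100) \<le> sigma_xi M m \<xi> p \<phi> N v f0"
    unfolding sigma_xi_def
  proof (rule cINF_greatest[OF ne])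
    fix g' assume "g' \<in> Sigma_terms \<phi> N v"
    then obtain J \<beta> where J: "J \<subseteq> {1..N}" "card J = v" and g': "g' = comb \<phi> J \<beta>" using Sig by blast
    show "Lp_norm M p (F K) / (H * 100) \<le> Lp_xi_norm M m \<xi> p (\<lambda>x. f0 x - g' x)"
      using second[OF J, of \<beta>] g' Hpos by (simp add: pos_divide_le_eq mult_ac)
  qed
  show ?thesis
  proof
    show "dnorm m \<xi> (F (8 * c' * v)) \<le> 4 * sigma_disc m \<xi> \<phi> N v f0" using D1 unfolding K_def by simp
    show "Lp_norm M p (F (8 * c' * v)) \<le> H * 100 * sigma_xi M m \<xi> p \<phi> N v f0"
      using D2 Hpos unfolding K_def by (simp add: pos_divide_le_eq mult_ac)
  qed
qed



theorem theorem3p1: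
  shows "\<exists>C0 C1 :: real.
    \<forall>t R1 R2 :: real. 0 < t \<and> t \<le> 1 \<and> 0 < R1 \<and> R1 \<le> R2 \<longrightarrow>
    (\<exists>c :: nat. 1 \<le> c \<and>
      (\<forall>(d :: nat) (\<Omega> :: (nat \<Rightarrow> real) set) (M :: (nat \<Rightarrow> real) measure) (p :: real) (N :: nat)
         (\<phi> :: nat \<Rightarrow> (nat \<Rightarrow> real) \<Rightarrow> complex) (u :: nat) (m :: nat) (\<xi> :: nat \<Rightarrow> (nat \<Rightarrow> real))
         (H :: real).
         \<Omega> \<subseteq> {x. \<forall>i\<ge>d. x i = 0} \<and> compact \<Omega> \<and>
         prob_space M \<and> space M = \<Omega> \<and> sets M = sets (restrict_space borel \<Omega>) \<and>
         2 \<le> p \<and>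
         (\<forall>j\<in>{1..N}. continuous_on \<Omega> (\<phi> j) \<and> (\<forall>x\<in>\<Omega>. cmod (\<phi> j x) \<le> 1)) \<and>
         riesz_system M \<phi> N R1 R2 \<and>
         1 \<le> u \<and> u \<le> N \<and>
         (\<forall>j\<in>{1..m}. \<xi> j \<in> \<Omega>) \<and>
         universal_discretization M 2 m \<xi> \<phi> N u \<and>
         nikolskii M \<phi> N 2 p H u
       \<longrightarrow>
         (\<forall>(v :: nat) (f0 :: (nat \<Rightarrow> real) \<Rightarrow> complex) (g :: nat \<Rightarrow> nat)
            (F :: nat \<Rightarrow> (nat \<Rightarrow> real) \<Rightarrow> complex).
            real v \<le> real u / (1 + real c) \<and> continuous_on \<Omega> f0 \<and>
            womp_run m \<xi> \<phi> N t f0 g F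
          \<longrightarrow> dnorm m \<xi> (F (c * v)) \<le> C0 * sigma_disc m \<xi> \<phi> N v f0
            \<and> Lp_norm M p (F (c * v)) \<le> H * C1 * sigma_xi M m \<xi> p \<phi> N v f0)))"
  apply (rule exI[of _ "4::real"], rule exI[of _ "100::real"], intro allI impI)
  subgoal premises tR for t R1 R2
  proof -
    have t0: "0 < t" and R10: "0 < R1" and R12: "R1 \<le> R2" using tR by auto
    define X where "X = 64 * (3 * R2\<^sup>2 / 2) / (R1\<^sup>2 / 2 * (R1\<^sup>2 / 2 * t\<^sup>2))"
    have R20: "0 < R2" using R10 R12 by linarith
    have Xp: "0 < X" unfolding X_def using t0 R10 R20 by (intro divide_pos_pos mult_pos_pos) auto
    have c1: "1 \<le> 8 * nat \<lceil>X\<rceil>"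
    proof -
      have "1 \<le> \<lceil>X\<rceil>" using Xp by (simp add: one_le_ceiling)
      then have "1 \<le> nat \<lceil>X\<rceil>" by linarith
      then show ?thesis by linarith
    qed
    show ?thesis
      apply (rule exI[of _ "8 * nat \<lceil>X\<rceil>"])
      apply (rule conjI[OF c1])
      apply (intro allI impI)
      apply (elim conjE)
      apply (rule core[where c' = "nat \<lceil>X\<rceil>", OF t0 R10 R12])
                      apply (simp add: X_def)
                     apply assumption+
      done
  qed
  done


end
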